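(* For every even positive integer $m$, the complexes $K_{m,m}$ and $\widehat K_m$ are VH-complexes. Hence there exists a finite cover $\overline K_m\to\widehat K_m$ such that $\overline K_m$ is a special cube complex.
   Context: $G_{m,m}=\langle a_1,\dots,a_{2m+1}\mid [a_i,a_{i+1}]=1\ (1\le i\le m),\ a_{m+j+1}^{-1}a_ja_{m+j+1}=a_{m+j}\ (1\le j\le m)\rangle$, $K_{m,m}$ its presentation square complex. $\widehat K_m$ is the finite cover of $K_{m,m}$ corresponding to the stabilizer of $(0,\dots,0)$ under the following right action $\pi$ of $G_{m,m}$ on $H_{2m+1}=\{0,1\}^{2m+1}$: with $H_n\subset H_{n+1}$ (append $0$), $H_n^*\subset H_{n+1}$ (last coordinate $1$), $\beta_i$ the flip of coordinate $i$, $\varphi_{k,m+k}$ the swap of coordinates $k$, $m+k$: $\pi(a_i)=\beta_i$ on $H_{m+1}$ for $i\le m+1$; for $k=1,\dots,m$, $\pi(a_{m+k+1})=\beta_{m+k+1}$ on $H_{m+k+1}$ and $\pi(a_j)|_{H^*_{m+k}}=\beta_{m+k+1}\circ\varphi_{k,m+k}\circ\pi(a_j)|_{H_{m+k}}\circ\varphi_{k,m+k}\circ\beta_{m+k+1}$ for $j\le m+k$ (where $\pi(gh)=\pi(h)\pi(g)$). A simple square complex is a VH-complex if its edges are partitioned into vertical and horizontal classes so that each square has attaching map $vhv'h'$ with $v,v'$ vertical and $h,h'$ horizontal. A non-positively curved cube complex is special if its hyperplanes are two-sided and have no self-intersections, self-osculations or inter-osculations. *)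

theory Defs
  imports Main
begin

text \<open>A (combinatorial) square complex: vertices, oriented edges with source and
target, and squares given by their attaching map, a closed edge path of length 4.
An entry (e, True) traverses e from src to tgt, (e, False) from tgt to src.\<close>

record ('v, 'e, 's) sqc =
  V   :: "'v set"
  E   :: "'e set"
  S   :: "'s set"
  src :: "'e \<Rightarrow> 'v"
  tgt :: "'e \<Rightarrow> 'v"
  bd  :: "'s \<Rightarrow> ('e \<times> bool) list"

definition ent :: "('v,'e,'s) sqc \<Rightarrow> 's \<Rightarrow> nat \<Rightarrow> 'e \<times> bool" where
  "ent X s i = bd X s ! (i mod 4)"

text \<open>Half-edges: (e, True) is the source end of e, (e, False) its target end.
The entry (e,b) leaves from the half-edge (e,b) and arrives through (e, \<not>b).\<close>
definition hvtx :: "('v,'e,'s) sqc \<Rightarrow> 'e \<times> bool \<Rightarrow> 'v" where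
  "hvtx X h = (if snd h then src X (fst h) else tgt X (fst h))"

definition flipb :: "'e \<times> bool \<Rightarrow> 'e \<times> bool" where
  "flipb h = (fst h, \<not> snd h)"

definition sqc_wf :: "('v,'e,'s) sqc \<Rightarrow> bool" where
  "sqc_wf X \<longleftrightarrow>
     (\<forall>e\<in>E X. src X e \<in> V X \<and> tgt X e \<in> V X) \<and>
     (\<forall>s\<in>S X. length (bd X s) = 4 \<and>
        (\<forall>i<4. fst (ent X s i) \<in> E X \<and>
               hvtx X (flipb (ent X s i)) = hvtx X (ent X s (i+1))))"

definition finite_cx :: "('v,'e,'s) sqc \<Rightarrow> bool" where
  "finite_cx X \<longleftrightarrow> finite (V X) \<and> finite (E X) \<and> finite (S X)"

definition connected_cx :: "('v,'e,'s) sqc \<Rightarrow> bool" where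
  "connected_cx X \<longleftrightarrow>
     (\<forall>u\<in>V X. \<forall>w\<in>V X. (u, w) \<in> ({(src X e, tgt X e) | e. e \<in> E X} \<union>
                                    {(tgt X e, src X e) | e. e \<in> E X})\<^sup>*)"

definition is_VH :: "('v,'e,'s) sqc \<Rightarrow> bool" where
  "is_VH X \<longleftrightarrow> (\<exists>Vt Ht. Vt \<union> Ht = E X \<and> Vt \<inter> Ht = {} \<and>
     (\<forall>s\<in>S X. \<exists>k\<in>{0,1::nat}. \<forall>i<4.
         fst (ent X s (i + k)) \<in> (if even i then Vt else Ht)))"

definition corners :: "('v,'e,'s) sqc \<Rightarrow> 'v \<Rightarrow> ('s \<times> nat) set" where
  "corners X v = {(s, i). s \<in> S X \<and> i < 4 \<and> hvtx X (ent X s i) = v}"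

definition covering_map ::
  "('v,'e,'s) sqc \<Rightarrow> ('w,'f,'t) sqc \<Rightarrow> ('v \<Rightarrow> 'w) \<Rightarrow> ('e \<Rightarrow> 'f) \<Rightarrow> ('s \<Rightarrow> 't) \<Rightarrow> bool"
where
  "covering_map X Y fV fE fS \<longleftrightarrow>
     fV ` V X \<subseteq> V Y \<and> fE ` E X \<subseteq> E Y \<and> fS ` S X \<subseteq> S Y \<and>
     (\<forall>e\<in>E X. src Y (fE e) = fV (src X e) \<and> tgt Y (fE e) = fV (tgt X e)) \<and>
     (\<forall>s\<in>S X. bd Y (fS s) = map (\<lambda>(e, b). (fE e, b)) (bd X s)) \<and>
     (\<forall>v\<in>V X.
        bij_betw fE {e\<in>E X. src X e = v} {e\<in>E Y. src Y e = fV v} \<and>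
        bij_betw fE {e\<in>E X. tgt X e = v} {e\<in>E Y. tgt Y e = fV v} \<and>
        bij_betw (\<lambda>(s, i). (fS s, i)) (corners X v) (corners Y (fV v)))"

definition finite_cover ::
  "('v,'e,'s) sqc \<Rightarrow> ('w,'f,'t) sqc \<Rightarrow> ('v \<Rightarrow> 'w) \<Rightarrow> ('e \<Rightarrow> 'f) \<Rightarrow> ('s \<Rightarrow> 't) \<Rightarrow> bool"
where
  "finite_cover X Y fV fE fS \<longleftrightarrow>
     sqc_wf X \<and> finite_cx X \<and> V X \<noteq> {} \<and> connected_cx X \<and> covering_map X Y fV fE fS"

text \<open>Link: vertices are half-edges, each corner (s,i) gives a link edge joining
the arrival half-edge of entry i-1 and the departure half-edge of entry i.\<close>
definition corner_ends :: "('v,'e,'s) sqc \<Rightarrow> 's \<Rightarrow> nat \<Rightarrow> ('e \<times> bool) set" where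
  "corner_ends X s i = {flipb (ent X s (i + 3)), ent X s i}"

definition lnk :: "('v,'e,'s) sqc \<Rightarrow> 'e \<times> bool \<Rightarrow> 'e \<times> bool \<Rightarrow> bool" where
  "lnk X h h' \<longleftrightarrow> (\<exists>s\<in>S X. \<exists>i<4. corner_ends X s i = {h, h'})"

text \<open>Gromov's link condition for square complexes: all links are simplicial
(no loops, no multiple edges) and flag (no 3-cycles).\<close>
definition npc :: "('v,'e,'s) sqc \<Rightarrow> bool" where
  "npc X \<longleftrightarrow>
     (\<forall>s\<in>S X. \<forall>i<4. flipb (ent X s (i + 3)) \<noteq> ent X s i) \<and>
     (\<forall>s\<in>S X. \<forall>i<4. \<forall>s'\<in>S X. \<forall>i'<4.
         corner_ends X s i = corner_ends X s' i' \<longrightarrow> (s, i) = (s', i')) \<and>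
     \<not> (\<exists>h1 h2 h3. h1 \<noteq> h2 \<and> h2 \<noteq> h3 \<and> h1 \<noteq> h3 \<and>
           lnk X h1 h2 \<and> lnk X h2 h3 \<and> lnk X h1 h3)"

text \<open>Hyperplanes: equivalence classes of edges under the relation generated by
being opposite sides of a square.\<close>
definition opp :: "('v,'e,'s) sqc \<Rightarrow> ('e \<times> 'e) set" where
  "opp X = {(fst (ent X s i), fst (ent X s (i + 2))) | s i. s \<in> S X \<and> i < 4}"

definition hyp :: "('v,'e,'s) sqc \<Rightarrow> ('e \<times> 'e) set" where
  "hyp X = (opp X \<union> (opp X)\<inverse>)\<^sup>*"

text \<open>Edges e, f are consecutive sides of a square (so their hyperplanes cross
in that square).\<close>
definition consec :: "('v,'e,'s) sqc \<Rightarrow> 'e \<Rightarrow> 'e \<Rightarrow> bool" where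
  "consec X e f \<longleftrightarrow> (\<exists>s\<in>S X. \<exists>i<4. fst (ent X s i) = e \<and>
       (fst (ent X s (i + 1)) = f \<or> fst (ent X s (i + 3)) = f))"

definition in_common_sq :: "('v,'e,'s) sqc \<Rightarrow> 'e \<Rightarrow> 'e \<Rightarrow> bool" where
  "in_common_sq X e f \<longleftrightarrow> (\<exists>s\<in>S X. \<exists>i<4. \<exists>j<4. fst (ent X s i) = e \<and> fst (ent X s j) = f)"

definition share_vertex :: "('v,'e,'s) sqc \<Rightarrow> 'e \<Rightarrow> 'e \<Rightarrow> bool" where
  "share_vertex X e f \<longleftrightarrow> {src X e, tgt X e} \<inter> {src X f, tgt X f} \<noteq> {}"

text \<open>An orientation o of the edges (o e = True keeps the orientation of e) is
a transverse orientation of all hyperplanes if opposite sides of every square are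
parallel; such an o exists iff all hyperplanes are two-sided.\<close>
definition two_sided_by :: "('v,'e,'s) sqc \<Rightarrow> ('e \<Rightarrow> bool) \<Rightarrow> bool" where
  "two_sided_by X ori \<longleftrightarrow> (\<forall>s\<in>S X. \<forall>i<4.
      (snd (ent X s i) = ori (fst (ent X s i))) \<noteq>
      (snd (ent X s (i + 2)) = ori (fst (ent X s (i + 2)))))"

definition ostart :: "('v,'e,'s) sqc \<Rightarrow> ('e \<Rightarrow> bool) \<Rightarrow> 'e \<Rightarrow> 'v" where
  "ostart X ori e = (if ori e then src X e else tgt X e)"

definition oend :: "('v,'e,'s) sqc \<Rightarrow> ('e \<Rightarrow> bool) \<Rightarrow> 'e \<Rightarrow> 'v" where
  "oend X ori e = (if ori e then tgt X e else src X e)"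

definition self_intersects :: "('v,'e,'s) sqc \<Rightarrow> bool" where
  "self_intersects X \<longleftrightarrow> (\<exists>e\<in>E X. \<exists>f\<in>E X. (e, f) \<in> hyp X \<and> consec X e f)"

definition direct_self_osc :: "('v,'e,'s) sqc \<Rightarrow> ('e \<Rightarrow> bool) \<Rightarrow> bool" where
  "direct_self_osc X ori \<longleftrightarrow> (\<exists>e\<in>E X. \<exists>f\<in>E X. e \<noteq> f \<and> (e, f) \<in> hyp X \<and>
      (ostart X ori e = ostart X ori f \<or> oend X ori e = oend X ori f) \<and> \<not> in_common_sq X e f)"

definition inter_osc :: "('v,'e,'s) sqc \<Rightarrow> bool" where
  "inter_osc X \<longleftrightarrow> (\<exists>e1\<in>E X. \<exists>e2\<in>E X. \<exists>f1\<in>E X. \<exists>f2\<in>E X.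
      (e1, f1) \<in> hyp X \<and> (e2, f2) \<in> hyp X \<and> (e1, e2) \<notin> hyp X \<and>
      consec X e1 e2 \<and> share_vertex X f1 f2 \<and> \<not> in_common_sq X f1 f2)"

definition special :: "('v,'e,'s) sqc \<Rightarrow> bool" where
  "special X \<longleftrightarrow> sqc_wf X \<and> npc X \<and>
     (\<exists>ori. two_sided_by X ori \<and> \<not> direct_self_osc X ori) \<and>
     \<not> self_intersects X \<and> \<not> inter_osc X"

text \<open>Relators of G_{m,m}, as words in generators 1..2m+1 (True = exponent +1).
Relator r (1 \<le> r \<le> m): [a_r, a_{r+1}] = a_r a_{r+1} a_r^{-1} a_{r+1}^{-1};
relator m+j (1 \<le> j \<le> m): a_{m+j+1}^{-1} a_j a_{m+j+1} a_{m+j}^{-1}.\<close>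
definition rel :: "nat \<Rightarrow> nat \<Rightarrow> (nat \<times> bool) list" where
  "rel m r = (if r \<le> m then [(r, True), (r+1, True), (r, False), (r+1, False)]
              else [(r+1, False), (r-m, True), (r+1, True), (r, False)])"

definition Kmm :: "nat \<Rightarrow> (unit, nat, nat) sqc" where
  "Kmm m = \<lparr> V = {()}, E = {1..2*m+1}, S = {1..2*m},
             src = (\<lambda>_. ()), tgt = (\<lambda>_. ()), bd = rel m \<rparr>"

text \<open>Points of H_n are functions nat \<Rightarrow> bool (coordinates 1..n).\<close>
definition flipc :: "nat \<Rightarrow> (nat \<Rightarrow> bool) \<Rightarrow> (nat \<Rightarrow> bool)" where
  "flipc i x = x(i := \<not> x i)"

definition swapc :: "nat \<Rightarrow> nat \<Rightarrow> (nat \<Rightarrow> bool) \<Rightarrow> (nat \<Rightarrow> bool)" where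
  "swapc k l x = x(k := x l, l := x k)"

text \<open>piL m n j = \<pi>(a_j) on H_n, for m+1 \<le> n \<le> 2m+1 and j \<le> n (n = m+k+1).\<close>
function piL :: "nat \<Rightarrow> nat \<Rightarrow> nat \<Rightarrow> (nat \<Rightarrow> bool) \<Rightarrow> (nat \<Rightarrow> bool)" where
  "piL m n j x =
     (if n \<le> m + 1 then flipc j x
      else if j = n then flipc n x
      else if \<not> x n then piL m (n - 1) j x
      else (let k = n - 1 - m in
            flipc n (swapc k (n - 1) (piL m (n - 1) j (swapc k (n - 1) (flipc n x))))))"
  by auto
termination by (relation "measure (\<lambda>(m, n, j, x). n)") auto

definition piA :: "nat \<Rightarrow> nat \<Rightarrow> (nat \<Rightarrow> bool) \<Rightarrow> (nat \<Rightarrow> bool)" where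
  "piA m j = piL m (2*m+1) j"

text \<open>Orbit of (0,...,0) under the right action; it is in bijection with the
cosets of the stabilizer.\<close>
inductive_set orbit0 :: "nat \<Rightarrow> (nat \<Rightarrow> bool) set" for m where
  base: "(\<lambda>_. False) \<in> orbit0 m"
| step: "x \<in> orbit0 m \<Longrightarrow> j \<in> {1..2*m+1} \<Longrightarrow> piA m j x \<in> orbit0 m"

fun walk :: "'x set \<Rightarrow> (nat \<Rightarrow> 'x \<Rightarrow> 'x) \<Rightarrow> 'x \<Rightarrow> (nat \<times> bool) list \<Rightarrow> (('x \<times> nat) \<times> bool) list" where
  "walk Ob act c [] = []"
| "walk Ob act c ((g, b) # w) =
     (if b then ((c, g), True) # walk Ob act (act g c) w
      else (let d = inv_into Ob (act g) c in ((d, g), False) # walk Ob act d w))"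

text \<open>The cover of the presentation complex associated with a right action on Ob:
vertices Ob, an edge (x, i) from x to x.a_i, and a square (x, r) for each relator r
read from x.\<close>
definition action_cx :: "nat \<Rightarrow> (nat \<Rightarrow> (nat \<times> bool) list) \<Rightarrow> nat \<Rightarrow> 'x set \<Rightarrow>
     (nat \<Rightarrow> 'x \<Rightarrow> 'x) \<Rightarrow> ('x, 'x \<times> nat, 'x \<times> nat) sqc" where
  "action_cx n R nr Ob act = \<lparr> V = Ob, E = Ob \<times> {1..n}, S = Ob \<times> {1..nr},
      src = fst, tgt = (\<lambda>(x, i). act i x), bd = (\<lambda>(x, r). walk Ob act x (R r)) \<rparr>"

definition Khat :: "nat \<Rightarrow> (nat \<Rightarrow> bool, (nat \<Rightarrow> bool) \<times> nat, (nat \<Rightarrow> bool) \<times> nat) sqc" where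
  "Khat m = action_cx (2*m+1) (rel m) (2*m) (orbit0 m) (piA m)"

end

theory Submission
  imports Defs "HOL-Library.Countable_Set"
begin

function tlv :: "nat \<Rightarrow> nat \<Rightarrow> nat \<Rightarrow> (nat \<Rightarrow> bool) \<Rightarrow> bool" where
  "tlv m n k x = (if n - Suc m \<le> k then x n
                 else if tlv m n (Suc k) x then x (Suc k) else x (m + Suc k))"
  by auto
termination by (relation "measure (\<lambda>(m, n, k, x). n - Suc m - k)") auto

declare tlv.simps[simp del]

definition cfL :: "nat \<Rightarrow> nat \<Rightarrow> nat \<Rightarrow> (nat \<Rightarrow> bool) \<Rightarrow> nat" where
  "cfL m n i x = (if i = n then n
     else if i \<le> m then (if i \<le> n - Suc m \<and> tlv m n i x then m + i else i)
     else (if tlv m n (i - m) x then i - m else i))"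

lemma flipc_flipc_same[simp]: "flipc c (flipc c x) = x"
  unfolding flipc_def by auto

lemma flipc_apply: "flipc c x k = (if k = c then \<not> x c else x k)"
  unfolding flipc_def by auto

lemma tl_low: "\<not> x n \<Longrightarrow> k \<le> n - Suc m - 1 \<Longrightarrow> Suc m < n \<Longrightarrow> tlv m n k x = tlv m (n - 1) k x"
proof (induction "n - Suc m - 1 - k" arbitrary: k)
  case 0
  then have k: "k = n - Suc m - 1" by simp
  have s1: "tlv m n (Suc k) x = x n" using k 0 by (subst tlv.simps) auto
  have "tlv m n k x = (if tlv m n (Suc k) x then x (Suc k) else x (m + Suc k))"
    using 0 k by (subst tlv.simps) auto
  then have s2: "tlv m n k x = x (n - 1)" using s1 0 k
    by (simp add: Suc_diff_Suc)
  have s3: "tlv m (n - 1) k x = x (n - 1)" using k 0 by (subst tlv.simps) auto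
  show ?case using s2 s3 by simp
next
  case (Suc d)
  have a: "tlv m n k x = (if tlv m n (Suc k) x then x (Suc k) else x (m + Suc k))"
    using Suc by (subst tlv.simps) auto
  have b: "tlv m (n-1) k x = (if tlv m (n-1) (Suc k) x then x (Suc k) else x (m + Suc k))"
    using Suc by (subst tlv.simps) auto
  have "tlv m n (Suc k) x = tlv m (n-1) (Suc k) x" using Suc by auto
  then show ?case using a b by simp
qed

lemma tl_high:
  assumes "x n" "k \<le> n - Suc m - 1" "Suc m < n" "n \<le> 2 * m + 1"
  shows "tlv m n k x = tlv m (n - 1) k (swapc (n - Suc m) (n - 1) (flipc n x))"
  using assms
proof (induction "n - Suc m - 1 - k" arbitrary: k)
  case 0
  then have k: "k = n - Suc m - 1" by simp
  have s1: "tlv m n (Suc k) x = x n" using k 0 by (subst tlv.simps) auto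
  have "tlv m n k x = (if tlv m n (Suc k) x then x (Suc k) else x (m + Suc k))"
    using 0 k by (subst tlv.simps) auto
  then have s2: "tlv m n k x = x (n - Suc m)" using s1 0 k
    by (simp add: Suc_diff_Suc)
  have s3: "tlv m (n - 1) k (swapc (n - Suc m) (n - 1) (flipc n x)) = x (n - Suc m)"
    using k 0 by (subst tlv.simps) (auto simp: swapc_def flipc_def)
  show ?case using s2 s3 by simp
next
  case (Suc d)
  let ?y = "swapc (n - Suc m) (n - 1) (flipc n x)"
  have a: "tlv m n k x = (if tlv m n (Suc k) x then x (Suc k) else x (m + Suc k))"
    using Suc by (subst tlv.simps) auto
  have b: "tlv m (n-1) k ?y = (if tlv m (n-1) (Suc k) ?y then ?y (Suc k) else ?y (m + Suc k))"
    using Suc by (subst tlv.simps) auto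
  have c: "tlv m n (Suc k) x = tlv m (n-1) (Suc k) ?y" using Suc by auto
  have d1: "?y (Suc k) = x (Suc k)" using Suc by (auto simp: swapc_def flipc_def)
  have d2: "?y (m + Suc k) = x (m + Suc k)" using Suc by (auto simp: swapc_def flipc_def)
  show ?case using a b c d1 d2 by simp
qed

lemma swapc_flipc: "swapc a b (flipc c y) = flipc (if c = a then b else if c = b then a else c) (swapc a b y)"
  unfolding swapc_def flipc_def by (rule ext) auto

lemma swapc_swapc: "swapc a b (swapc a b y) = y"
  unfolding swapc_def by (rule ext) auto

lemma flipc_comm: "flipc a (flipc b y) = flipc b (flipc a y)"
  unfolding flipc_def by (rule ext) auto



lemma cfL_low:
  assumes "\<not> x n" "Suc (Suc m) \<le> n" "1 \<le> j" "j < n"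
  shows "cfL m n j x = cfL m (n - 1) j x"
proof -
  have top: "tlv m n (n - Suc m) x = False" using assms(1) by (subst tlv.simps) auto
  have tl: "\<And>k. k \<le> n - Suc m - 1 \<Longrightarrow> tlv m n k x = tlv m (n - 1) k x"
    using tl_low[of x n _ m, OF assms(1)] assms(2) by auto
  consider (a) "j \<le> m" "j < n - Suc m" | (b) "j \<le> m" "j = n - Suc m"
    | (c) "j \<le> m" "j > n - Suc m" | (d) "j > m" "j = n - 1" | (e) "j > m" "j < n - 1"
    using assms by linarith
  then show ?thesis
  proof cases
    case a
    then have "j \<noteq> n" "j \<noteq> n - 1" "j \<le> n - 1 - Suc m" "j \<le> n - Suc m" using assms by auto
    then show ?thesis using a tl[of j] unfolding cfL_def by simp
  next
    case b
    then have "j \<noteq> n" "j \<noteq> n - 1" "\<not> j \<le> n - 1 - Suc m" "j \<le> n - Suc m" using assms by auto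
    then show ?thesis using b top unfolding cfL_def by simp
  next
    case c
    then have "j \<noteq> n" "j \<noteq> n - 1" "\<not> j \<le> n - 1 - Suc m" "\<not> j \<le> n - Suc m" using assms by auto
    then show ?thesis using c unfolding cfL_def by simp
  next
    case d
    then have "j - m = n - Suc m" "j \<noteq> n" "\<not> j \<le> m" using assms by auto
    then show ?thesis using d top unfolding cfL_def by simp
  next
    case e
    then have "j - m \<le> n - Suc m - 1" "j \<noteq> n" "j \<noteq> n - 1" "\<not> j \<le> m" using assms by auto
    then show ?thesis using e tl[of "j - m"] unfolding cfL_def by simp
  qed
qed

lemma cfL_high:
  assumes "x n" "Suc (Suc m) \<le> n" "n \<le> 2 * m + 1" "1 \<le> j" "j < n"
  defines "y \<equiv> swapc (n - Suc m) (n - 1) (flipc n x)"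
  defines "c \<equiv> cfL m (n - 1) j y"
  shows "cfL m n j x = (if c = n - Suc m then n - 1 else if c = n - 1 then n - Suc m else c)"
proof -
  have top: "tlv m n (n - Suc m) x = True" using assms(1) by (subst tlv.simps) auto
  have tl: "\<And>k. k \<le> n - Suc m - 1 \<Longrightarrow> tlv m n k x = tlv m (n - 1) k y"
    using tl_high[of x n _ m, OF assms(1)] assms(2,3) unfolding y_def by auto
  consider (a) "j \<le> m" "j < n - Suc m" | (b) "j \<le> m" "j = n - Suc m"
    | (c) "j \<le> m" "j > n - Suc m" | (d) "j > m" "j = n - 1" | (e) "j > m" "j < n - 1"
    using assms by linarith
  then show ?thesis
  proof cases
    case a
    then have "j \<noteq> n" "j \<noteq> n - 1" "j \<le> n - 1 - Suc m" "j \<le> n - Suc m" "j \<noteq> n - Suc m" "m + j \<noteq> n - 1" "m + j \<noteq> n - Suc m" using assms by auto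
    then show ?thesis using a tl[of j] unfolding cfL_def c_def by simp
  next
    case b
    then have "j \<noteq> n" "j \<noteq> n - 1" "\<not> j \<le> n - 1 - Suc m" "j \<le> n - Suc m" using assms by auto
    then show ?thesis using b top unfolding cfL_def c_def by simp
  next
    case c
    then have "j \<noteq> n" "j \<noteq> n - 1" "\<not> j \<le> n - 1 - Suc m" "\<not> j \<le> n - Suc m" "j \<noteq> n - Suc m" using assms by auto
    then show ?thesis using c unfolding cfL_def c_def by simp
  next
    case d
    then have "j - m = n - Suc m" "j \<noteq> n" "\<not> j \<le> m" using assms by auto
    then show ?thesis using d top unfolding cfL_def c_def by simp
  next
    case e
    then have "j - m \<le> n - Suc m - 1" "j \<noteq> n" "j \<noteq> n - 1" "\<not> j \<le> m" "j - m \<noteq> n - Suc m" "j \<noteq> n - Suc m" "j - m \<noteq> n - 1" using assms by auto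
    then show ?thesis using e tl[of "j - m"] unfolding cfL_def c_def by simp
  qed
qed



declare piL.simps[simp del]

lemma piL_cfL:
  "Suc m \<le> n \<Longrightarrow> n \<le> 2 * m + 1 \<Longrightarrow> 1 \<le> i \<Longrightarrow> i \<le> n \<Longrightarrow> piL m n i x = flipc (cfL m n i x) x"
proof (induction m n i x rule: piL.induct)
  case (1 m n j x)
  show ?case
  proof (cases "n \<le> m + 1")
    case True
    then show ?thesis using 1 by (subst piL.simps) (auto simp: cfL_def)
  next
    case nle: False
    show ?thesis
    proof (cases "j = n")
      case True
      then show ?thesis using 1 nle by (subst piL.simps) (auto simp: cfL_def)
    next
      case jn: False
      show ?thesis
      proof (cases "x n")
        case False
        have IH: "piL m (n - 1) j x = flipc (cfL m (n - 1) j x) x"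
          using 1(1) nle jn False 1(3-6) by auto
        have eq: "cfL m n j x = cfL m (n - 1) j x"
          using cfL_low[of x n m j, OF False] nle jn 1(3-6) by auto
        show ?thesis using IH eq nle jn False by (subst piL.simps) auto
      next
        case True
        let ?k = "n - 1 - m"
        let ?y = "swapc ?k (n - 1) (flipc n x)"
        have IH: "piL m (n - 1) j ?y = flipc (cfL m (n - 1) j ?y) ?y"
          using 1(2)[of ?k] nle jn True 1(3-6) by auto
        let ?c = "cfL m (n - 1) j ?y"
        have eq: "cfL m n j x = (if ?c = ?k then n - 1 else if ?c = n - 1 then ?k else ?c)"
          using cfL_high[of x n m j, OF True] nle jn 1(3-6) by auto
        have "piL m n j x = flipc n (swapc ?k (n - 1) (piL m (n - 1) j ?y))"
          using nle jn True by (subst piL.simps) (simp add: Let_def)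
        also have "\<dots> = flipc n (swapc ?k (n - 1) (flipc ?c ?y))" using IH by simp
        also have "\<dots> = flipc n (flipc (if ?c = ?k then n - 1 else if ?c = n - 1 then ?k else ?c) (flipc n x))"
          by (simp add: swapc_flipc swapc_swapc)
        also have "\<dots> = flipc (cfL m n j x) x" using eq by (simp add: flipc_comm)
        finally show ?thesis .
      qed
    qed
  qed
qed


definition tt :: "nat \<Rightarrow> nat \<Rightarrow> (nat \<Rightarrow> bool) \<Rightarrow> bool" where
  "tt m k x = tlv m (2 * m + 1) k x"

definition cf :: "nat \<Rightarrow> nat \<Rightarrow> (nat \<Rightarrow> bool) \<Rightarrow> nat" where
  "cf m i x = cfL m (2 * m + 1) i x"

definition pr :: "nat \<Rightarrow> nat \<Rightarrow> nat" where
  "pr m c = (if c \<le> m then c else if c \<le> 2 * m then c - m else m + 1)"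

lemma tt_rec: "tt m k x = (if m \<le> k then x (2 * m + 1)
   else if tt m (Suc k) x then x (Suc k) else x (m + Suc k))"
  unfolding tt_def by (subst tlv.simps) simp

lemma tt_ge: "m \<le> k \<Longrightarrow> tt m k x = x (2 * m + 1)"
  by (subst tt_rec) simp

lemma tt_lt: "k < m \<Longrightarrow> tt m k x = (if tt m (Suc k) x then x (Suc k) else x (m + Suc k))"
  by (subst tt_rec) simp

lemma cf_lo: "1 \<le> i \<Longrightarrow> i \<le> m \<Longrightarrow> cf m i x = (if tt m i x then m + i else i)"
  unfolding cf_def cfL_def tt_def by auto

lemma cf_hi: "m < i \<Longrightarrow> i \<le> 2 * m \<Longrightarrow> cf m i x = (if tt m (i - m) x then i - m else i)"
  unfolding cf_def cfL_def tt_def by auto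

lemma cf_top: "cf m (2 * m + 1) x = 2 * m + 1"
  unfolding cf_def cfL_def by auto

lemma cf_top': "i = 2 * m + 1 \<Longrightarrow> cf m i x = i"
  using cf_top by simp

lemma piA_cf: "1 \<le> i \<Longrightarrow> i \<le> 2 * m + 1 \<Longrightarrow> piA m i x = flipc (cf m i x) x"
  unfolding piA_def cf_def by (rule piL_cfL) auto

lemma tt_dep:
  assumes "\<And>c. k < c \<Longrightarrow> c \<le> m \<Longrightarrow> x c = y c"
    and "\<And>c. m + k < c \<Longrightarrow> c \<le> 2 * m \<Longrightarrow> x c = y c"
    and "x (2 * m + 1) = y (2 * m + 1)"
  shows "tt m k x = tt m k y"
  using assms
proof (induction "m - k" arbitrary: k)
  case 0
  then show ?case by (simp add: tt_ge)
next
  case (Suc d)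
  then have km: "k < m" by simp
  have "tt m (Suc k) x = tt m (Suc k) y"
    using Suc by auto
  moreover have "x (Suc k) = y (Suc k)" using Suc(3) km by simp
  moreover have "x (m + Suc k) = y (m + Suc k)" using Suc(4) km by simp
  ultimately show ?case using km by (simp add: tt_lt[of k m])
qed

lemma tt_flip_low:
  assumes "c = j \<or> c = m + j" "j \<le> k" "1 \<le> j" "j \<le> m"
  shows "tt m k (flipc c x) = tt m k x"
  by (rule tt_dep) (use assms in \<open>auto simp: flipc_def\<close>)

lemma tt_step:
  assumes "k < m" "tt m (Suc k) y = tt m (Suc k) x" "y (Suc k) = x (Suc k)" "y (m + Suc k) = x (m + Suc k)"
  shows "tt m k y = tt m k x"
  using assms by (simp add: tt_lt)

lemma tt_flip_L:
  assumes "1 \<le> j" "j \<le> m"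
  shows "tt m k (flipc (cf m j x) x) = tt m k x"
proof (cases "j \<le> k")
  case True
  then show ?thesis using assms by (intro tt_flip_low[of _ j]) (auto simp: cf_lo)
next
  case False
  let ?y = "flipc (cf m j x) x"
  have top: "tt m j ?y = tt m j x" using assms by (intro tt_flip_low[of _ j]) (auto simp: cf_lo)
  have "\<forall>k. k < j \<longrightarrow> tt m k ?y = tt m k x"
  proof (intro allI impI)
    fix k assume "k < j"
    then show "tt m k ?y = tt m k x"
    proof (induction "j - 1 - k" arbitrary: k)
      case 0
      then have k: "Suc k = j" by simp
      have cv: "cf m j x = (if tt m j x then m + j else j)" using assms by (simp add: cf_lo)
      have "tt m k ?y = (if tt m j ?y then ?y j else ?y (m + j))"
        using k assms tt_lt[of k m ?y] by simp
      also have "\<dots> = (if tt m j x then x j else x (m + j))"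
        using top cv assms by (auto simp: flipc_def)
      also have "\<dots> = tt m k x" using k assms tt_lt[of k m x] by simp
      finally show ?case .
    next
      case (Suc d)
      show ?case
      proof (rule tt_step)
        show "k < m" using Suc assms by simp
        show "tt m (Suc k) ?y = tt m (Suc k) x" using Suc by simp
        show "?y (Suc k) = x (Suc k)" "?y (m + Suc k) = x (m + Suc k)"
          using assms Suc by (auto simp: cf_lo flipc_def)
      qed
    qed
  qed
  then show ?thesis using False by simp
qed

lemma tt_flip_H:
  assumes "j < m"
  shows "tt m j (flipc (cf m (m + Suc j) x) x) = (\<not> tt m j x)"
proof -
  have c: "cf m (m + Suc j) x = (if tt m (Suc j) x then Suc j else m + Suc j)"
    using assms by (simp add: cf_hi)
  let ?y = "flipc (cf m (m + Suc j) x) x"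
  have "tt m (Suc j) ?y = tt m (Suc j) x"
    using c assms by (intro tt_flip_low[of _ "Suc j"]) auto
  then show ?thesis using assms c by (simp add: tt_lt[of j m] flipc_def)
qed

lemma tt_flip_top: "tt m m (flipc (2 * m + 1) x) = (\<not> tt m m x)"
  by (simp add: tt_ge flipc_def)

lemma cf_tt_cong:
  assumes "\<And>k. tt m k y = tt m k x"
  shows "cf m i y = cf m i x"
  unfolding cf_def cfL_def using assms unfolding tt_def by simp

lemma cf_range:
  assumes "1 \<le> i" "i \<le> 2 * m + 1"
  shows "cf m i x = i \<or> (i \<le> m \<and> cf m i x = m + i) \<or> (m < i \<and> i \<le> 2 * m \<and> cf m i x = i - m)"
  using assms by (cases "i \<le> m"; cases "i \<le> 2 * m") (auto simp: cf_lo cf_hi cf_top')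

lemma pr_cf:
  assumes "1 \<le> i" "i \<le> 2 * m + 1"
  shows "pr m (cf m i x) = pr m i"
  using cf_range[OF assms, of x] assms unfolding pr_def by auto

lemma cf_pos: "1 \<le> i \<Longrightarrow> i \<le> 2 * m + 1 \<Longrightarrow> 1 \<le> cf m i x \<and> cf m i x \<le> 2 * m + 1"
  using cf_range[of i m x] by auto

lemma cf_inj:
  assumes "1 \<le> i" "i \<le> 2 * m + 1" "1 \<le> i'" "i' \<le> 2 * m + 1" "cf m i x = cf m i' x"
  shows "i = i'"
proof -
  have "pr m i = pr m i'" using pr_cf[OF assms(1,2), of x] pr_cf[OF assms(3,4), of x] assms(5) by simp
  then show ?thesis using assms
    by (cases "i \<le> m"; cases "i \<le> 2 * m"; cases "i' \<le> m"; cases "i' \<le> 2 * m")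
       (auto simp: pr_def cf_lo cf_hi cf_top' split: if_splits)
qed

lemma cf_invol:
  assumes "1 \<le> i" "i \<le> 2 * m + 1"
  shows "cf m i (flipc (cf m i x) x) = cf m i x"
proof (cases "i \<le> m")
  case True
  have "tt m i (flipc (cf m i x) x) = tt m i x"
    using True assms by (intro tt_flip_low[of _ i]) (auto simp: cf_lo)
  then show ?thesis using True assms by (simp add: cf_lo)
next
  case False
  show ?thesis
  proof (cases "i \<le> 2 * m")
    case True
    have "tt m (i - m) (flipc (cf m i x) x) = tt m (i - m) x"
      using True False assms by (intro tt_flip_low[of _ "i - m"]) (auto simp: cf_hi)
    then show ?thesis using True False assms by (simp add: cf_hi)
  next
    case False
    then have "i = 2 * m + 1" using assms by simp
    then show ?thesis by (simp add: cf_top')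
  qed
qed

lemma piA_invol:
  assumes "1 \<le> i" "i \<le> 2 * m + 1"
  shows "piA m i (piA m i x) = x"
  using assms by (simp add: piA_cf cf_invol)

lemma comm1:
  assumes "1 \<le> r" "r \<le> m"
  shows "cf m r (flipc (cf m (Suc r) x) x) = cf m r x"
proof (cases "r < m")
  case True
  have "\<And>k. tt m k (flipc (cf m (Suc r) x) x) = tt m k x"
    using True assms by (intro tt_flip_L) auto
  then show ?thesis by (rule cf_tt_cong)
next
  case False
  then have rm: "r = m" using assms by simp
  have c: "cf m (Suc m) x = (if tt m 1 x then 1 else m + 1)"
    using assms rm by (simp add: cf_hi)
  have "tt m m (flipc (cf m (Suc m) x) x) = tt m m x"
    using assms rm c by (intro tt_flip_low[of _ 1]) auto
  then show ?thesis using rm assms by (simp add: cf_lo)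
qed

lemma comm2:
  assumes "1 \<le> r" "r \<le> m"
  shows "cf m (Suc r) (flipc (cf m r x) x) = cf m (Suc r) x"
proof -
  have "\<And>k. tt m k (flipc (cf m r x) x) = tt m k x"
    using assms by (intro tt_flip_L) auto
  then show ?thesis by (rule cf_tt_cong)
qed

lemma conj1:
  assumes "1 \<le> j" "j \<le> m"
  shows "cf m j (flipc (cf m (m + Suc j) x) x) = cf m (m + j) x"
proof (cases "j < m")
  case True
  have "tt m j (flipc (cf m (m + Suc j) x) x) = (\<not> tt m j x)"
    using True by (rule tt_flip_H)
  then show ?thesis using assms by (simp add: cf_lo cf_hi)
next
  case False
  then have jm: "j = m" using assms by simp
  have "cf m (m + Suc m) x = 2 * m + 1" by (simp add: cf_top')
  then have "tt m m (flipc (cf m (m + Suc m) x) x) = (\<not> tt m m x)"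
    using tt_flip_top[of m x] by simp
  then show ?thesis using assms jm by (simp add: cf_lo cf_hi)
qed

lemma conj2:
  assumes "1 \<le> j" "j \<le> m"
  shows "cf m (m + Suc j) (flipc (cf m (m + j) x) (flipc (cf m (m + Suc j) x) x)) = cf m (m + Suc j) x"
proof (cases "j < m")
  case True
  let ?y = "flipc (cf m (m + Suc j) x) x"
  have a: "tt m (Suc j) ?y = tt m (Suc j) x"
    using True assms by (intro tt_flip_low[of _ "Suc j"]) (auto simp: cf_hi)
  have b: "cf m (m + j) ?y = cf m (m + j) x \<or> True" by simp
  have c: "cf m (m + j) x = j \<or> cf m (m + j) x = m + j" using assms by (auto simp: cf_hi)
  have "tt m (Suc j) (flipc (cf m (m + j) x) ?y) = tt m (Suc j) ?y"
    using c assms by (intro tt_flip_low[of _ j]) auto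
  then show ?thesis using a True assms by (simp add: cf_hi)
next
  case False
  then have "m + Suc j = 2 * m + 1" using assms by simp
  then show ?thesis by (simp only: cf_top')
qed


lemma ent_mod: "ent X s (i mod 4) = ent X s i"
  unfolding ent_def by simp

lemma ent_add4: "ent X s (i + 4) = ent X s i"
  unfolding ent_def by simp

lemma flipc_twice[simp]: "flipc c (flipc c x) = x"
  unfolding flipc_def by auto

lemma fun_eq_but: "(\<And>k. k \<noteq> c \<Longrightarrow> f k = g k) \<Longrightarrow> f c = g c \<Longrightarrow> f = g"
  by (rule ext) metis

lemma fun_eq_flip: "(\<And>k. k \<noteq> c \<Longrightarrow> f k = g k) \<Longrightarrow> f c \<noteq> g c \<Longrightarrow> f = flipc c g"
  unfolding flipc_def by (rule ext) auto

lemma ent_3_1: "ent X s (i + 3 + 1) = ent X s i"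
  unfolding ent_def by simp

lemma fst_flipb[simp]: "fst (flipb h) = fst h"
  unfolding flipb_def by simp

locale critl =
  fixes X :: "('v,'e,'s) sqc" and \<phi> :: "'v \<Rightarrow> nat \<Rightarrow> bool" and cc :: "'e \<Rightarrow> nat"
    and col :: "'e \<Rightarrow> bool" and adj :: "nat \<Rightarrow> nat \<Rightarrow> bool"
  assumes wf: "sqc_wf X"
    and injphi: "inj_on \<phi> (V X)"
    and tgtphi: "\<And>e. e \<in> E X \<Longrightarrow> \<phi> (tgt X e) = flipc (cc e) (\<phi> (src X e))"
    and uniq: "\<And>e f. e \<in> E X \<Longrightarrow> f \<in> E X \<Longrightarrow> src X e = src X f \<Longrightarrow> cc e = cc f \<Longrightarrow> e = f"
    and sq1: "\<And>s i. s \<in> S X \<Longrightarrow> cc (fst (ent X s (i+2))) = cc (fst (ent X s i))"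
    and sq2: "\<And>s i. s \<in> S X \<Longrightarrow>
      \<phi> (src X (fst (ent X s (i+2)))) = flipc (cc (fst (ent X s (i+1)))) (\<phi> (src X (fst (ent X s i))))"
    and sq3: "\<And>s i k. s \<in> S X \<Longrightarrow> k \<noteq> cc (fst (ent X s i)) \<Longrightarrow> k \<noteq> cc (fst (ent X s (i+1))) \<Longrightarrow>
           \<phi> (src X (fst (ent X s i))) k = \<phi> (src X (fst (ent X s (i+1)))) k"
    and sq4: "\<And>s i. s \<in> S X \<Longrightarrow> snd (ent X s i) \<noteq> snd (ent X s (i+2))"
    and sq5: "\<And>s i. s \<in> S X \<Longrightarrow> adj (cc (fst (ent X s i))) (cc (fst (ent X s (i+1))))"
    and sq6: "\<And>s i. s \<in> S X \<Longrightarrow> col (fst (ent X s i)) \<noteq> col (fst (ent X s (i+1)))"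
    and sym: "\<And>a b. adj a b \<Longrightarrow> adj b a"
    and irr: "\<And>a. \<not> adj a a"
    and tri: "\<And>a b k. adj a b \<Longrightarrow> adj a k \<Longrightarrow> adj b k \<Longrightarrow> False"
    and cinj: "\<And>s i s' i'. s \<in> S X \<Longrightarrow> i < 4 \<Longrightarrow> s' \<in> S X \<Longrightarrow> i' < 4 \<Longrightarrow>
        corner_ends X s i = corner_ends X s' i' \<Longrightarrow> (s, i) = (s', i')"
begin

lemma sq: "s \<in> S X \<Longrightarrow> cc (fst (ent X s (i+2))) = cc (fst (ent X s i)) \<and>
      \<phi> (src X (fst (ent X s (i+2)))) = flipc (cc (fst (ent X s (i+1)))) (\<phi> (src X (fst (ent X s i)))) \<and>
      (\<forall>k. k \<noteq> cc (fst (ent X s i)) \<longrightarrow> k \<noteq> cc (fst (ent X s (i+1))) \<longrightarrow>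
           \<phi> (src X (fst (ent X s i))) k = \<phi> (src X (fst (ent X s (i+1)))) k) \<and>
      snd (ent X s i) \<noteq> snd (ent X s (i+2)) \<and>
      adj (cc (fst (ent X s i))) (cc (fst (ent X s (i+1)))) \<and>
      col (fst (ent X s i)) \<noteq> col (fst (ent X s (i+1)))"
  using sq1 sq2 sq3 sq4 sq5 sq6 by blast

lemma ent_E: "s \<in> S X \<Longrightarrow> fst (ent X s i) \<in> E X"
proof -
  assume s: "s \<in> S X"
  have "fst (ent X s (i mod 4)) \<in> E X" using wf s unfolding sqc_wf_def by auto
  then show ?thesis by (simp add: ent_mod)
qed

lemma src_V: "e \<in> E X \<Longrightarrow> src X e \<in> V X" using wf unfolding sqc_wf_def by auto
lemma tgt_V: "e \<in> E X \<Longrightarrow> tgt X e \<in> V X" using wf unfolding sqc_wf_def by auto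

definition lab :: "'e \<Rightarrow> nat \<times> (nat \<Rightarrow> bool)" where
  "lab e = (cc e, (\<lambda>k. if adj (cc e) k then False else \<phi> (src X e) k))"

lemma opp_lab: "(e, f) \<in> opp X \<Longrightarrow> lab e = lab f"
proof -
  assume "(e, f) \<in> opp X"
  then obtain s i where s: "s \<in> S X" and e: "e = fst (ent X s i)" and f: "f = fst (ent X s (i + 2))"
    unfolding opp_def by auto
  have q: "cc f = cc e" "\<phi> (src X f) = flipc (cc (fst (ent X s (i+1)))) (\<phi> (src X e))"
    "adj (cc e) (cc (fst (ent X s (i+1))))"
    using sq[OF s, of i] e f by auto
  show ?thesis unfolding lab_def using q
    by (auto simp: flipc_def intro!: ext)
qed

lemma hyp_lab: "(e, f) \<in> hyp X \<Longrightarrow> lab e = lab f"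
  unfolding hyp_def
proof (induction rule: rtrancl_induct)
  case base
  then show ?case by simp
next
  case (step y z)
  then show ?case using opp_lab[of y z] opp_lab[of z y] by auto
qed

lemma hyp_cc: "(e, f) \<in> hyp X \<Longrightarrow> cc e = cc f"
  using hyp_lab[of e f] unfolding lab_def by simp

lemma hyp_src: "(e, f) \<in> hyp X \<Longrightarrow> \<not> adj (cc e) k \<Longrightarrow> \<phi> (src X e) k = \<phi> (src X f) k"
proof -
  assume h: "(e, f) \<in> hyp X" and k: "\<not> adj (cc e) k"
  have "(\<lambda>k. if adj (cc e) k then False else \<phi> (src X e) k) =
        (\<lambda>k. if adj (cc f) k then False else \<phi> (src X f) k)"
    using arg_cong[OF hyp_lab[OF h], of snd] unfolding lab_def by (simp only: snd_conv)
  then have "(if adj (cc e) k then False else \<phi> (src X e) k) =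
        (if adj (cc f) k then False else \<phi> (src X f) k)" by metis
  then show ?thesis using k hyp_cc[OF h] by simp
qed

lemma two_sided: "two_sided_by X (\<lambda>_. True)"
  unfolding two_sided_by_def
proof (intro ballI allI impI)
  fix s i assume "s \<in> S X" "i < (4::nat)"
  then have "snd (ent X s i) \<noteq> snd (ent X s (i + 2))" using sq4 by blast
  then show "(snd (ent X s i) = True) \<noteq> (snd (ent X s (i + 2)) = True)" by blast
qed

lemma no_dso: "\<not> direct_self_osc X (\<lambda>_. True)"
proof
  assume "direct_self_osc X (\<lambda>_. True)"
  then obtain e f where ef: "e \<in> E X" "f \<in> E X" "e \<noteq> f" "(e, f) \<in> hyp X"
    and o: "src X e = src X f \<or> tgt X e = tgt X f"
    unfolding direct_self_osc_def ostart_def oend_def by auto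
  have c: "cc e = cc f" using hyp_cc[OF ef(4)] .
  have "src X e = src X f"
  proof (cases "src X e = src X f")
    case False
    then have t: "tgt X e = tgt X f" using o by simp
    have "\<phi> (src X e) = flipc (cc e) (\<phi> (tgt X e))" using tgtphi[OF ef(1)] by simp
    also have "\<dots> = \<phi> (src X f)" using tgtphi[OF ef(2)] t c by simp
    finally show ?thesis using injphi src_V ef by (auto dest: inj_onD)
  qed simp
  then show False using uniq[OF ef(1,2) _ c] ef(3) by simp
qed

lemma consec_adj: "consec X e f \<Longrightarrow> adj (cc e) (cc f)"
proof -
  assume "consec X e f"
  then obtain s i where s: "s \<in> S X" and e: "fst (ent X s i) = e"
    and f: "fst (ent X s (i + 1)) = f \<or> fst (ent X s (i + 3)) = f"
    unfolding consec_def by auto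
  show ?thesis
  proof (cases "fst (ent X s (i + 1)) = f")
    case True
    then show ?thesis using sq[OF s, of i] e by auto
  next
    case False
    then have f3: "fst (ent X s (i + 3)) = f" using f by simp
    have "adj (cc (fst (ent X s (i + 3)))) (cc (fst (ent X s (i + 3 + 1))))"
      using sq[OF s, of "i + 3"] by simp
    moreover have "ent X s (i + 3 + 1) = ent X s i" by (rule ent_3_1)
    ultimately show ?thesis using e f3 sym by auto
  qed
qed

lemma no_selfint: "\<not> self_intersects X"
  unfolding self_intersects_def using hyp_cc consec_adj irr by fastforce

lemma core:
  assumes s: "s \<in> S X" and f1: "f1 \<in> E X" and f2: "f2 \<in> E X"
    and h1: "(fst (ent X s i), f1) \<in> hyp X" and h2: "(fst (ent X s (i + 1)), f2) \<in> hyp X"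
    and sv: "share_vertex X f1 f2"
  shows "in_common_sq X f1 f2"
proof -
  let ?E = "\<lambda>k. fst (ent X s k)"
  define c1 where "c1 = cc (?E i)"
  define c2 where "c2 = cc (?E (i + 1))"
  have a12: "adj c1 c2" using sq[OF s, of i] unfolding c1_def c2_def by simp
  have cf1: "cc f1 = c1" using hyp_cc[OF h1] c1_def by simp
  have cf2: "cc f2 = c2" using hyp_cc[OF h2] c2_def by simp
  have sq0: "\<forall>k. k \<noteq> c1 \<longrightarrow> k \<noteq> c2 \<longrightarrow> \<phi> (src X (?E i)) k = \<phi> (src X (?E (i+1))) k"
    using sq[OF s, of i] unfolding c1_def c2_def by simp
  obtain v where v1: "v = src X f1 \<or> v = tgt X f1" and v2: "v = src X f2 \<or> v = tgt X f2"
    using sv unfolding share_vertex_def by auto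
  have pv1: "\<And>k. k \<noteq> c1 \<Longrightarrow> \<phi> v k = \<phi> (src X f1) k"
    using v1 tgtphi[OF f1] cf1 by (auto simp: flipc_def)
  have pv2: "\<And>k. k \<noteq> c2 \<Longrightarrow> \<phi> v k = \<phi> (src X f2) k"
    using v2 tgtphi[OF f2] cf2 by (auto simp: flipc_def)
  have l1: "\<And>k. \<not> adj c1 k \<Longrightarrow> \<phi> (src X f1) k = \<phi> (src X (?E i)) k"
    using hyp_src[OF h1] c1_def by metis
  have l2: "\<And>k. \<not> adj c2 k \<Longrightarrow> \<phi> (src X f2) k = \<phi> (src X (?E (i+1))) k"
    using hyp_src[OF h2] c2_def by metis
  have A: "\<And>k. k \<noteq> c2 \<Longrightarrow> \<phi> (src X f1) k = \<phi> (src X (?E i)) k"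
  proof -
    fix k assume k: "k \<noteq> c2"
    show "\<phi> (src X f1) k = \<phi> (src X (?E i)) k"
    proof (cases "adj c1 k")
      case False then show ?thesis using l1 by simp
    next
      case True
      have kc1: "k \<noteq> c1" using True irr by auto
      have n2: "\<not> adj c2 k" using True a12 tri by blast
      have "\<phi> (src X f1) k = \<phi> v k" using pv1 kc1 by simp
      also have "\<dots> = \<phi> (src X f2) k" using pv2 k by simp
      also have "\<dots> = \<phi> (src X (?E (i+1))) k" using l2 n2 by simp
      also have "\<dots> = \<phi> (src X (?E i)) k" using sq0 k kc1 by simp
      finally show ?thesis .
    qed
  qed
  have B: "\<And>k. k \<noteq> c1 \<Longrightarrow> \<phi> (src X f2) k = \<phi> (src X (?E (i+1))) k"
  proof -
    fix k assume k: "k \<noteq> c1"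
    show "\<phi> (src X f2) k = \<phi> (src X (?E (i+1))) k"
    proof (cases "adj c2 k")
      case False then show ?thesis using l2 by simp
    next
      case True
      have kc2: "k \<noteq> c2" using True irr by auto
      have n1: "\<not> adj c1 k" using True a12 tri sym by blast
      have "\<phi> (src X f2) k = \<phi> v k" using pv2 kc2 by simp
      also have "\<dots> = \<phi> (src X f1) k" using pv1 k by simp
      also have "\<dots> = \<phi> (src X (?E i)) k" using l1 n1 by simp
      also have "\<dots> = \<phi> (src X (?E (i+1))) k" using sq0 k kc2 by simp
      finally show ?thesis .
    qed
  qed
  have E2: "\<phi> (src X (?E (i+2))) = flipc c2 (\<phi> (src X (?E i)))"
    using sq[OF s, of i] unfolding c2_def by simp
  have cE2: "cc (?E (i+2)) = c1" using sq[OF s, of i] unfolding c1_def by simp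
  have ii: "i + 1 + 2 = i + 3" "i + 1 + 1 = i + 2" by simp_all
  have E3: "\<phi> (src X (?E (i+3))) = flipc c1 (\<phi> (src X (?E (i+1))))"
    using sq2[OF s, of "i+1"] cE2 unfolding ii by simp
  have cE3: "cc (?E (i+3)) = c2" using sq1[OF s, of "i+1"] unfolding c2_def ii by simp
  have inE: "\<And>k. ?E k \<in> E X" using ent_E[OF s] by simp
  have F1: "f1 = ?E i \<or> f1 = ?E (i+2)"
  proof (cases "\<phi> (src X f1) c2 = \<phi> (src X (?E i)) c2")
    case True
    then have "\<phi> (src X f1) = \<phi> (src X (?E i))" using A by (intro fun_eq_but)
    then have "src X f1 = src X (?E i)" using injphi src_V f1 inE by (auto dest: inj_onD)
    then show ?thesis using uniq[OF f1 inE] cf1 c1_def by auto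
  next
    case False
    then have "\<phi> (src X f1) = flipc c2 (\<phi> (src X (?E i)))" using A by (intro fun_eq_flip)
    then have "\<phi> (src X f1) = \<phi> (src X (?E (i+2)))" using E2 by simp
    then have "src X f1 = src X (?E (i+2))" using injphi src_V f1 inE by (auto dest: inj_onD)
    then show ?thesis using uniq[OF f1 inE] cf1 cE2 by auto
  qed
  have F2: "f2 = ?E (i+1) \<or> f2 = ?E (i+3)"
  proof (cases "\<phi> (src X f2) c1 = \<phi> (src X (?E (i+1))) c1")
    case True
    then have "\<phi> (src X f2) = \<phi> (src X (?E (i+1)))" using B by (intro fun_eq_but)
    then have "src X f2 = src X (?E (i+1))" using injphi src_V f2 inE by (auto dest: inj_onD)
    then show ?thesis using uniq[OF f2 inE] cf2 c2_def by auto
  next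
    case False
    then have "\<phi> (src X f2) = flipc c1 (\<phi> (src X (?E (i+1))))" using B by (intro fun_eq_flip)
    then have "\<phi> (src X f2) = \<phi> (src X (?E (i+3)))" using E3 by simp
    then have "src X f2 = src X (?E (i+3))" using injphi src_V f2 inE by (auto dest: inj_onD)
    then show ?thesis using uniq[OF f2 inE] cf2 cE3 by auto
  qed
  have m: "\<And>k. ?E k = ?E (k mod 4)" by (simp add: ent_mod)
  have "\<exists>a<4. ?E a = f1" using F1 m by (metis mod_less_divisor zero_less_numeral)
  moreover have "\<exists>b<4. ?E b = f2" using F2 m by (metis mod_less_divisor zero_less_numeral)
  ultimately show ?thesis unfolding in_common_sq_def using s by blast
qed

lemma no_interosc: "\<not> inter_osc X"
proof
  assume "inter_osc X"
  then obtain e1 e2 f1 f2 where E: "e1 \<in> E X" "e2 \<in> E X" "f1 \<in> E X" "f2 \<in> E X"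
    and h: "(e1, f1) \<in> hyp X" "(e2, f2) \<in> hyp X" and c: "consec X e1 e2"
    and sv: "share_vertex X f1 f2" and n: "\<not> in_common_sq X f1 f2"
    unfolding inter_osc_def by blast
  obtain s i where s: "s \<in> S X" and e: "fst (ent X s i) = e1"
    and f: "fst (ent X s (i + 1)) = e2 \<or> fst (ent X s (i + 3)) = e2"
    using c unfolding consec_def by auto
  show False
  proof (cases "fst (ent X s (i + 1)) = e2")
    case True
    then show False using core[OF s E(3,4)] h e sv n by auto
  next
    case False
    then have f3: "fst (ent X s (i + 3)) = e2" using f by simp
    have e4: "fst (ent X s (i + 3 + 1)) = e1" using e ent_3_1[of X s i] by simp
    have sv': "share_vertex X f2 f1" using sv unfolding share_vertex_def by auto
    have "in_common_sq X f2 f1" using core[OF s E(4,3), of "i + 3"] h f3 e4 sv' by auto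
    then have "in_common_sq X f1 f2" unfolding in_common_sq_def by blast
    then show False using n by simp
  qed
qed

lemma lnk_col: "lnk X h h' \<Longrightarrow> col (fst h) \<noteq> col (fst h')"
proof -
  assume "lnk X h h'"
  then obtain s i where s: "s \<in> S X" and ce: "corner_ends X s i = {h, h'}"
    unfolding lnk_def by auto
  let ?a = "flipb (ent X s (i + 3))" and ?b = "ent X s i"
  have d: "col (fst ?a) \<noteq> col (fst ?b)"
    using sq6[OF s, of "i+3"] ent_3_1[of X s i] by (metis fst_flipb)
  have "{?a, ?b} = {h, h'}" using ce unfolding corner_ends_def by simp
  then show ?thesis using d by (auto simp: doubleton_eq_iff)
qed

lemma npc: "npc X"
  unfolding npc_def
proof (intro conjI ballI allI impI)
  fix s and i :: nat assume s: "s \<in> S X" and "i < 4"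
  have "col (fst (ent X s (i + 3))) \<noteq> col (fst (ent X s i))"
    using sq6[OF s, of "i+3"] ent_3_1[of X s i] by metis
  then show "flipb (ent X s (i + 3)) \<noteq> ent X s i" by (metis fst_flipb)
next
  fix s i s' i' assume "s \<in> S X" "i < 4" "s' \<in> S X" "i' < 4"
    "corner_ends X s i = corner_ends X s' i'"
  then show "(s, i) = (s', i')" using cinj by blast
next
  show "\<not> (\<exists>h1 h2 h3. h1 \<noteq> h2 \<and> h2 \<noteq> h3 \<and> h1 \<noteq> h3 \<and> lnk X h1 h2 \<and> lnk X h2 h3 \<and> lnk X h1 h3)"
    using lnk_col by blast
qed

lemma special: "special X"
  unfolding special_def using wf npc two_sided no_dso no_selfint no_interosc by blast

end



lemma orbit_flip: "x \<in> orbit0 m \<Longrightarrow> 1 \<le> i \<Longrightarrow> i \<le> 2 * m + 1 \<Longrightarrow> flipc (cf m i x) x \<in> orbit0 m"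
  using orbit0.step[of x m i] piA_cf[of i m x] by auto

lemma orbit_piA: "x \<in> orbit0 m \<Longrightarrow> 1 \<le> i \<Longrightarrow> i \<le> 2 * m + 1 \<Longrightarrow> piA m i x \<in> orbit0 m"
  using orbit0.step[of x m i] by auto

lemma orbit_supp: "x \<in> orbit0 m \<Longrightarrow> x c \<Longrightarrow> c \<in> {1..2 * m + 1}"
proof (induction rule: orbit0.induct)
  case base
  then show ?case by simp
next
  case (step x j)
  have "piA m j x = flipc (cf m j x) x" using step by (intro piA_cf) auto
  moreover have "cf m j x \<in> {1..2*m+1}" using cf_pos[of j m x] step by auto
  ultimately show ?case using step by (auto simp: flipc_def split: if_splits)
qed

lemma finite_orbit: "finite (orbit0 m)"
proof -
  have "orbit0 m \<subseteq> (\<lambda>A c. c \<in> A) ` Pow {1..2 * m + 1}"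
  proof
    fix x assume x: "x \<in> orbit0 m"
    have "x = (\<lambda>c. c \<in> {c. x c})" by auto
    moreover have "{c. x c} \<in> Pow {1..2 * m + 1}" using orbit_supp[OF x] by auto
    ultimately show "x \<in> (\<lambda>A c. c \<in> A) ` Pow {1..2 * m + 1}" by blast
  qed
  then show ?thesis by (rule finite_subset) auto
qed

lemma piA_inj: "1 \<le> i \<Longrightarrow> i \<le> 2 * m + 1 \<Longrightarrow> piA m i x = piA m i x' \<Longrightarrow> x = x'"
  by (metis piA_invol)

lemma inv_piA:
  assumes "c \<in> orbit0 m" "1 \<le> i" "i \<le> 2 * m + 1"
  shows "inv_into (orbit0 m) (piA m i) c = piA m i c"
proof (rule inv_into_f_eq)
  show "inj_on (piA m i) (orbit0 m)" using assms piA_inj by (auto intro: inj_onI)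
  show "piA m i c \<in> orbit0 m" using assms by (rule orbit_piA)
  show "piA m i (piA m i c) = c" using assms by (simp add: piA_invol)
qed

definition sqK :: "nat \<Rightarrow> (nat \<Rightarrow> bool) \<Rightarrow> nat \<Rightarrow> (((nat \<Rightarrow> bool) \<times> nat) \<times> bool) list" where
  "sqK m x R = (if R \<le> m then
     [((x, R), True), ((flipc (cf m R x) x, Suc R), True), ((flipc (cf m (Suc R) x) x, R), False), ((x, Suc R), False)]
   else
     [((flipc (cf m (Suc R) x) x, Suc R), False), ((flipc (cf m (Suc R) x) x, R - m), True),
      ((flipc (cf m R x) (flipc (cf m (Suc R) x) x), Suc R), True), ((x, R), False)])"

lemma Khat_V: "V (Khat m) = orbit0 m" unfolding Khat_def action_cx_def by simp
lemma Khat_E: "E (Khat m) = orbit0 m \<times> {1..2*m+1}" unfolding Khat_def action_cx_def by simp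
lemma Khat_S: "S (Khat m) = orbit0 m \<times> {1..2*m}" unfolding Khat_def action_cx_def by simp
lemma Khat_src: "src (Khat m) = fst" unfolding Khat_def action_cx_def by simp
lemma Khat_tgt: "tgt (Khat m) e = piA m (snd e) (fst e)" unfolding Khat_def action_cx_def by (simp add: case_prod_beta)
lemma Khat_bd: "bd (Khat m) (x, R) = walk (orbit0 m) (piA m) x (rel m R)"
  unfolding Khat_def action_cx_def by simp

lemma bd_sqK:
  assumes x: "x \<in> orbit0 m" and R: "1 \<le> R" "R \<le> 2 * m"
  shows "bd (Khat m) (x, R) = sqK m x R"
proof (cases "R \<le> m")
  case True
  let ?a = "cf m R x" and ?b = "cf m (Suc R) x"
  have x1: "flipc ?a x \<in> orbit0 m" using x R True by (intro orbit_flip) auto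
  have b1: "cf m (Suc R) (flipc ?a x) = ?b" using R True by (intro comm2) auto
  have x2: "flipc ?b (flipc ?a x) \<in> orbit0 m" using orbit_flip[OF x1, of "Suc R"] b1 R True by auto
  have a2: "cf m R (flipc ?b (flipc ?a x)) = ?a"
  proof -
    have "cf m R (flipc ?b x) = ?a" using R True by (intro comm1) auto
    then have "cf m R (flipc ?a (flipc ?b x)) = ?a" using cf_invol[of R m "flipc ?b x"] R True by simp
    then show ?thesis by (simp add: flipc_comm)
  qed
  have x3: "flipc ?b x \<in> orbit0 m" using x R True by (intro orbit_flip) auto
  have b3: "cf m (Suc R) (flipc ?b x) = ?b" using R True by (intro cf_invol) auto
  have i1: "inv_into (orbit0 m) (piA m R) (flipc ?b (flipc ?a x)) = flipc ?b x"
    using inv_piA[OF x2, of R] R True piA_cf[of R m] a2 by (simp add: flipc_comm)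
  have i2: "inv_into (orbit0 m) (piA m (Suc R)) (flipc ?b x) = x"
    using inv_piA[OF x3, of "Suc R"] R True piA_cf[of "Suc R" m] b3 by simp
  show ?thesis
    using True R i1 i2 b1 piA_cf[of R m x] piA_cf[of "Suc R" m "flipc ?a x"]
    unfolding Khat_bd rel_def sqK_def by (simp add: Let_def)
next
  case False
  define j where "j = R - m"
  have j: "1 \<le> j" "j \<le> m" "R = m + j" using False R unfolding j_def by auto
  let ?H = "cf m (Suc R) x" and ?Q = "cf m R x"
  let ?y = "flipc ?H x"
  have y: "?y \<in> orbit0 m" using x R by (intro orbit_flip) auto
  have iy: "inv_into (orbit0 m) (piA m (Suc R)) x = ?y"
    using inv_piA[OF x, of "Suc R"] R piA_cf[of "Suc R" m x] by simp
  have c1: "cf m j ?y = ?Q" using conj1[OF j(1,2), of x] j by simp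
  have y2: "flipc ?Q ?y \<in> orbit0 m" using orbit_flip[OF y, of j] c1 j by auto
  have c2: "cf m (Suc R) (flipc ?Q ?y) = ?H" using conj2[OF j(1,2), of x] j by simp
  have y3: "flipc ?Q x \<in> orbit0 m" using x R by (intro orbit_flip) auto
  have c3: "cf m R (flipc ?Q x) = ?Q" using R by (intro cf_invol) auto
  have iq: "inv_into (orbit0 m) (piA m R) (flipc ?Q x) = x"
    using inv_piA[OF y3, of R] R piA_cf[of R m] c3 by simp
  have e3: "flipc ?H (flipc ?Q ?y) = flipc ?Q x" by (simp add: flipc_comm)
  show ?thesis
    using False R j iy iq c1 c2 e3 piA_cf[of j m ?y] piA_cf[of "Suc R" m "flipc ?Q ?y"]
    unfolding Khat_bd rel_def sqK_def by (simp add: Let_def)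
qed


definition PGadj :: "nat \<Rightarrow> nat \<Rightarrow> nat \<Rightarrow> bool" where
  "PGadj m a b \<longleftrightarrow> (1 \<le> a \<and> b = Suc a \<and> a < m) \<or> (1 \<le> b \<and> a = Suc b \<and> b < m) \<or>
     (a = m \<and> b = 1) \<or> (a = 1 \<and> b = m) \<or> (a = m \<and> b = Suc m) \<or> (a = Suc m \<and> b = m)"

definition adjc :: "nat \<Rightarrow> nat \<Rightarrow> nat \<Rightarrow> bool" where
  "adjc m a b \<longleftrightarrow> PGadj m (pr m a) (pr m b)"

lemma PG_sym: "PGadj m a b \<Longrightarrow> PGadj m b a"
  unfolding PGadj_def by auto

lemma PG_irr: "even m \<Longrightarrow> 0 < m \<Longrightarrow> \<not> PGadj m a a"
  unfolding PGadj_def by auto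

lemma PG_tri: "even m \<Longrightarrow> 0 < m \<Longrightarrow> PGadj m a b \<Longrightarrow> PGadj m a k \<Longrightarrow> PGadj m b k \<Longrightarrow> False"
  unfolding PGadj_def by (elim disjE) (auto simp: even_iff_mod_2_eq_zero)

definition ccK :: "nat \<Rightarrow> (nat \<Rightarrow> bool) \<times> nat \<Rightarrow> nat" where
  "ccK m e = cf m (snd e) (fst e)"

definition colK :: "(nat \<Rightarrow> bool) \<times> nat \<Rightarrow> bool" where
  "colK e = odd (snd e)"

lemma pr_simps: "1 \<le> a \<Longrightarrow> a \<le> m \<Longrightarrow> pr m a = a"
  "m < a \<Longrightarrow> a \<le> 2 * m \<Longrightarrow> pr m a = a - m"
  "pr m (Suc (2 * m)) = Suc m"
  unfolding pr_def by auto

lemma sqK_props: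
  assumes m: "even m" "0 < m" and x: "x \<in> orbit0 m" and R: "1 \<le> R" "R \<le> 2 * m" and r: "r < 4"
  defines "L \<equiv> sqK m x R"
  defines "Ee \<equiv> \<lambda>k. fst (L ! ((r + k) mod 4))"
  shows "ccK m (Ee 2) = ccK m (Ee 0)"
    and "fst (Ee 2) = flipc (ccK m (Ee 1)) (fst (Ee 0))"
    and "\<And>k. k \<noteq> ccK m (Ee 0) \<Longrightarrow> k \<noteq> ccK m (Ee 1) \<Longrightarrow> fst (Ee 0) k = fst (Ee 1) k"
    and "snd (L ! ((r + 0) mod 4)) \<noteq> snd (L ! ((r + 2) mod 4))"
    and "adjc m (ccK m (Ee 0)) (ccK m (Ee 1))"
    and "colK (Ee 0) \<noteq> colK (Ee 1)"
proof -
  have "(r = 0 \<or> r = 1 \<or> r = 2 \<or> r = 3)" using r by auto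
  note rc = this
  have "(ccK m (Ee 2) = ccK m (Ee 0)) \<and> (fst (Ee 2) = flipc (ccK m (Ee 1)) (fst (Ee 0))) \<and>
    (\<forall>k. k \<noteq> ccK m (Ee 0) \<longrightarrow> k \<noteq> ccK m (Ee 1) \<longrightarrow> fst (Ee 0) k = fst (Ee 1) k) \<and>
    (snd (L ! ((r + 0) mod 4)) \<noteq> snd (L ! ((r + 2) mod 4))) \<and>
    adjc m (ccK m (Ee 0)) (ccK m (Ee 1)) \<and> (colK (Ee 0) \<noteq> colK (Ee 1))"
  proof (cases "R \<le> m")
    case True
    let ?a = "cf m R x" and ?b = "cf m (Suc R) x"
    have A1: "cf m (Suc R) (flipc ?a x) = ?b" using R True by (intro comm2) auto
    have A2: "cf m R (flipc ?b x) = ?a" using R True by (intro comm1) auto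
    have pa: "pr m ?a = R" using R True pr_cf[of R m x] by (simp add: pr_simps)
    have pb: "pr m ?b = (if R < m then Suc R else 1)"
      using R True pr_cf[of "Suc R" m x] m by (auto simp: pr_def)
    have ad1: "PGadj m R (if R < m then Suc R else 1)" using R True unfolding PGadj_def by auto
    have ad2: "PGadj m (if R < m then Suc R else 1) R" using PG_sym[OF ad1] .
    have L: "L = [((x, R), True), ((flipc ?a x, Suc R), True), ((flipc ?b x, R), False), ((x, Suc R), False)]"
      using True unfolding L_def sqK_def by simp
    show ?thesis using rc
      by (elim disjE) (simp_all add: Ee_def L ccK_def colK_def A1 A2 adjc_def pa pb ad1 ad2 flipc_apply flipc_comm)
  next
    case False
    define j where "j = R - m"
    have j: "1 \<le> j" "j \<le> m" "R = m + j" using False R unfolding j_def by auto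
    let ?H = "cf m (Suc R) x" and ?Q = "cf m R x"
    let ?y = "flipc ?H x"
    have B1: "cf m (Suc R) ?y = ?H" using R by (intro cf_invol) auto
    have B2: "cf m (R - m) ?y = ?Q" using conj1[OF j(1,2), of x] j by simp
    have B3: "cf m (Suc R) (flipc ?Q ?y) = ?H" using conj2[OF j(1,2), of x] j by simp
    have pH: "pr m ?H = (if j < m then Suc j else Suc m)"
      using R j pr_cf[of "Suc R" m x] by (auto simp: pr_def)
    have pQ: "pr m ?Q = j" using R j pr_cf[of R m x] by (auto simp: pr_def)
    have pQ': "pr m ?Q = R - m" using pQ j by simp
    have ad1: "PGadj m (if j < m then Suc j else Suc m) (R - m)" using j unfolding PGadj_def by auto
    have ad2: "PGadj m (R - m) (if j < m then Suc j else Suc m)" using PG_sym[OF ad1] .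
    have par: "odd (Suc R) \<noteq> odd (R - m)" using j m by auto
    have nRm: "\<not> R < m" using False by simp
    have L: "L = [((?y, Suc R), False), ((?y, R - m), True), ((flipc ?Q ?y, Suc R), True), ((x, R), False)]"
      using False unfolding L_def sqK_def by simp
    show ?thesis using rc
      by (elim disjE) (simp_all add: Ee_def L ccK_def colK_def B1 B2 B3 adjc_def pH pQ' ad1 ad2 par m(1) nRm
          flipc_apply flipc_comm)
  qed
  then show "ccK m (Ee 2) = ccK m (Ee 0)"
    and "fst (Ee 2) = flipc (ccK m (Ee 1)) (fst (Ee 0))"
    and "\<And>k. k \<noteq> ccK m (Ee 0) \<Longrightarrow> k \<noteq> ccK m (Ee 1) \<Longrightarrow> fst (Ee 0) k = fst (Ee 1) k"
    and "snd (L ! ((r + 0) mod 4)) \<noteq> snd (L ! ((r + 2) mod 4))"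
    and "adjc m (ccK m (Ee 0)) (ccK m (Ee 1))"
    and "colK (Ee 0) \<noteq> colK (Ee 1)" by blast+
qed


definition gb :: "((nat \<Rightarrow> bool) \<times> nat) \<times> bool \<Rightarrow> nat \<times> bool" where
  "gb h = (snd (fst h), snd h)"

definition fgb :: "nat \<times> bool \<Rightarrow> nat \<times> bool" where
  "fgb p = (fst p, \<not> snd p)"

lemma gb_flipb: "gb (flipb h) = fgb (gb h)"
  unfolding gb_def fgb_def flipb_def by simp

lemma gb_sqK: "k < 4 \<Longrightarrow> gb (sqK m x R ! k) = rel m R ! k"
  unfolding sqK_def rel_def gb_def
  by (cases "R \<le> m"; cases "k = 0"; cases "k = 1"; cases "k = 2") (auto simp: Let_def)

lemma rel_corner:
  assumes m: "0 < m" and R: "1 \<le> R" "R \<le> 2 * m" and R': "1 \<le> R'" "R' \<le> 2 * m"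
    and i: "i < 4" and i': "i' < 4"
    and eq: "{fgb (rel m R ! ((i + 3) mod 4)), rel m R ! i} = {fgb (rel m R' ! ((i' + 3) mod 4)), rel m R' ! i'}"
  shows "R = R' \<and> i = i'"
proof -
  have ic: "i = 0 \<or> i = 1 \<or> i = 2 \<or> i = 3" using i by auto
  have ic': "i' = 0 \<or> i' = 1 \<or> i' = 2 \<or> i' = 3" using i' by auto
  show ?thesis using ic ic' eq m R R'
    by (elim disjE) (auto simp: rel_def fgb_def doubleton_eq_iff split: if_splits)
qed

lemma entK: "x \<in> orbit0 m \<Longrightarrow> 1 \<le> R \<Longrightarrow> R \<le> 2 * m \<Longrightarrow>
    ent (Khat m) (x, R) n = sqK m x R ! (n mod 4)"
  unfolding ent_def by (simp add: bd_sqK)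

lemma sqK_vinj:
  assumes x: "x \<in> orbit0 m" and x': "x' \<in> orbit0 m" and R: "1 \<le> R" "R \<le> 2 * m"
    and k: "k < 4" "k \<noteq> 2"
    and eq: "fst (fst (sqK m x R ! k)) = fst (fst (sqK m x' R ! k))"
  shows "x = x'"
proof -
  have kc: "k = 0 \<or> k = 1 \<or> k = 3" using k by auto
  show ?thesis
  proof (cases "R \<le> m")
    case True
    have "k = 1 \<Longrightarrow> piA m R x = piA m R x'"
      using eq True R piA_cf[of R m x] piA_cf[of R m x'] unfolding sqK_def by simp
    then show ?thesis using kc eq True R piA_inj[of R m x x'] unfolding sqK_def by auto
  next
    case False
    have "k = 0 \<or> k = 1 \<Longrightarrow> piA m (Suc R) x = piA m (Suc R) x'"
      using eq False R piA_cf[of "Suc R" m x] piA_cf[of "Suc R" m x'] unfolding sqK_def by auto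
    then show ?thesis using kc eq False R piA_inj[of "Suc R" m x x'] unfolding sqK_def by auto
  qed
qed

lemma cinjK:
  assumes m: "0 < m" and x: "x \<in> orbit0 m" and x': "x' \<in> orbit0 m"
    and R: "1 \<le> R" "R \<le> 2 * m" and R': "1 \<le> R'" "R' \<le> 2 * m"
    and i: "i < 4" and i': "i' < 4"
    and eq: "corner_ends (Khat m) (x, R) i = corner_ends (Khat m) (x', R') i'"
  shows "x = x' \<and> R = R' \<and> i = i'"
proof -
  let ?L = "sqK m x R" and ?L' = "sqK m x' R'"
  let ?a = "flipb (?L ! ((i + 3) mod 4))" and ?b = "?L ! i"
  let ?a' = "flipb (?L' ! ((i' + 3) mod 4))" and ?b' = "?L' ! i'"
  have ce: "{?a, ?b} = {?a', ?b'}"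
    using eq unfolding corner_ends_def entK[OF x R] entK[OF x' R'] using i i' by simp
  have g: "{fgb (rel m R ! ((i + 3) mod 4)), rel m R ! i} = {fgb (rel m R' ! ((i' + 3) mod 4)), rel m R' ! i'}"
  proof -
    have "gb ` {?a, ?b} = gb ` {?a', ?b'}" using ce by simp
    then show ?thesis using i i' by (simp add: gb_flipb gb_sqK)
  qed
  have RR: "R = R'" and ii: "i = i'" using rel_corner[OF m R R' i i' g] by auto
  have dif: "fst (gb ?a) \<noteq> fst (gb ?b)"
  proof -
    have ic: "i = 0 \<or> i = 1 \<or> i = 2 \<or> i = 3" using i by auto
    have "fst (fgb (rel m R ! ((i + 3) mod 4))) \<noteq> fst (rel m R ! i)"
      using ic m R by (elim disjE) (auto simp: rel_def fgb_def)
    then show ?thesis using i by (simp add: gb_flipb gb_sqK)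
  qed
  have gaa: "gb ?a = gb ?a'" using RR ii i by (simp add: gb_flipb gb_sqK)
  have gbb: "gb ?b = gb ?b'" using RR ii i by (simp add: gb_sqK)
  have ab: "?a = ?a' \<and> ?b = ?b'"
    using ce dif gaa gbb by (auto simp: doubleton_eq_iff)
  have e3: "?L ! ((i + 3) mod 4) = ?L' ! ((i + 3) mod 4)"
    using ab ii unfolding flipb_def by (auto simp: prod_eq_iff)
  have e0: "?L ! i = ?L' ! i" using ab ii by simp
  have "x = x'"
  proof (cases "i = 2")
    case True
    then show ?thesis using e3 sqK_vinj[OF x x' R, of 1] RR by simp
  next
    case False
    then show ?thesis using e0 sqK_vinj[OF x x' R, of i] RR i by simp
  qed
  then show ?thesis using RR ii by simp
qed


lemma sqK_wf:
  assumes m: "0 < m" and x: "x \<in> orbit0 m" and R: "1 \<le> R" "R \<le> 2 * m" and r: "r < 4"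
  defines "L \<equiv> sqK m x R"
  shows "fst (L ! r) \<in> orbit0 m \<times> {1..2*m+1}"
    and "hvtx (Khat m) (flipb (L ! r)) = hvtx (Khat m) (L ! ((r + 1) mod 4))"
proof -
  have rc: "r = 0 \<or> r = 1 \<or> r = 2 \<or> r = 3" using r by auto
  have "fst (L ! r) \<in> orbit0 m \<times> {1..2*m+1} \<and>
        hvtx (Khat m) (flipb (L ! r)) = hvtx (Khat m) (L ! ((r + 1) mod 4))"
  proof (cases "R \<le> m")
    case True
    let ?a = "cf m R x" and ?b = "cf m (Suc R) x"
    have A1: "cf m (Suc R) (flipc ?a x) = ?b" using R True by (intro comm2) auto
    have A2: "cf m R (flipc ?b x) = ?a" using R True by (intro comm1) auto
    have o1: "flipc ?a x \<in> orbit0 m" "flipc ?b x \<in> orbit0 m" using x R True by (auto intro!: orbit_flip)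
    have p1: "piA m R x = flipc ?a x" "piA m (Suc R) (flipc ?a x) = flipc ?b (flipc ?a x)"
      "piA m R (flipc ?b x) = flipc ?a (flipc ?b x)" "piA m (Suc R) x = flipc ?b x"
      using R True A1 A2 piA_cf[of R m] piA_cf[of "Suc R" m] by auto
    have L: "L = [((x, R), True), ((flipc ?a x, Suc R), True), ((flipc ?b x, R), False), ((x, Suc R), False)]"
      using True unfolding L_def sqK_def by simp
    show ?thesis using rc x o1 R True
      by (elim disjE) (auto simp: L hvtx_def flipb_def Khat_src Khat_tgt p1 flipc_comm)
  next
    case False
    define j where "j = R - m"
    have j: "1 \<le> j" "j \<le> m" "R = m + j" using False R unfolding j_def by auto
    let ?H = "cf m (Suc R) x" and ?Q = "cf m R x"
    let ?y = "flipc ?H x"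
    have B1: "cf m (Suc R) ?y = ?H" using R by (intro cf_invol) auto
    have B2: "cf m (R - m) ?y = ?Q" using conj1[OF j(1,2), of x] j by simp
    have B3: "cf m (Suc R) (flipc ?Q ?y) = ?H" using conj2[OF j(1,2), of x] j by simp
    have o1: "?y \<in> orbit0 m" using x R by (auto intro!: orbit_flip)
    have o2: "flipc ?Q ?y \<in> orbit0 m" using orbit_flip[OF o1, of "R - m"] B2 j by auto
    have p1: "piA m (Suc R) ?y = x" "piA m (R - m) ?y = flipc ?Q ?y"
      "piA m (Suc R) (flipc ?Q ?y) = flipc ?Q x" "piA m R x = flipc ?Q x"
      using R j B1 B2 B3 piA_cf[of "Suc R" m] piA_cf[of "R - m" m] piA_cf[of R m]
      by (auto simp: flipc_comm)
    have nRm: "\<not> R \<le> m" using False .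
    have L: "L = [((?y, Suc R), False), ((?y, R - m), True), ((flipc ?Q ?y, Suc R), True), ((x, R), False)]"
      using False unfolding L_def sqK_def by simp
    show ?thesis using rc x o1 o2 R j(1,2) nRm
      by (elim disjE) (auto simp: L hvtx_def flipb_def Khat_src Khat_tgt p1)
  qed
  then show "fst (L ! r) \<in> orbit0 m \<times> {1..2*m+1}"
    and "hvtx (Khat m) (flipb (L ! r)) = hvtx (Khat m) (L ! ((r + 1) mod 4))" by auto
qed

lemma Khat_wf:
  assumes m: "0 < m"
  shows "sqc_wf (Khat m)"
  unfolding sqc_wf_def
proof (intro conjI ballI allI impI)
  fix e assume "e \<in> E (Khat m)"
  then show "src (Khat m) e \<in> V (Khat m)" "tgt (Khat m) e \<in> V (Khat m)"
    by (auto simp: Khat_E Khat_V Khat_src Khat_tgt intro!: orbit_piA)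
next
  fix s assume "s \<in> S (Khat m)"
  then obtain x R where s: "s = (x, R)" and x: "x \<in> orbit0 m" and R: "1 \<le> R" "R \<le> 2 * m"
    by (auto simp: Khat_S)
  show "length (bd (Khat m) s) = 4" using s x R by (simp add: bd_sqK sqK_def)
  fix i :: nat assume i: "i < 4"
  show "fst (ent (Khat m) s i) \<in> E (Khat m)"
    using sqK_wf(1)[OF m x R i] s i by (simp add: entK[OF x R] Khat_E)
  show "hvtx (Khat m) (flipb (ent (Khat m) s i)) = hvtx (Khat m) (ent (Khat m) s (i + 1))"
    using sqK_wf(2)[OF m x R i] s i by (simp add: entK[OF x R])
qed

lemma ent_shift: "ent X s (i + k) = ent X s (i mod 4 + k)"
  unfolding ent_def by (simp add: mod_add_left_eq)

lemma critK:
  assumes m: "even m" "0 < m"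
  shows "critl (Khat m) (\<lambda>x. x) (ccK m) colK (adjc m)"
proof
  show "sqc_wf (Khat m)" using m by (intro Khat_wf) auto
  show "inj_on (\<lambda>x. x) (V (Khat m))" by simp
  fix e assume "e \<in> E (Khat m)"
  then show "tgt (Khat m) e = flipc (ccK m e) (src (Khat m) e)"
    by (auto simp: Khat_E Khat_src Khat_tgt ccK_def piA_cf)
next
  fix e f assume "e \<in> E (Khat m)" "f \<in> E (Khat m)" "src (Khat m) e = src (Khat m) f" "ccK m e = ccK m f"
  then show "e = f"
    by (cases e, cases f) (auto simp: Khat_E Khat_src ccK_def intro: cf_inj)
next
  fix a b assume "adjc m a b" then show "adjc m b a" unfolding adjc_def by (rule PG_sym)
next
  fix a show "\<not> adjc m a a" unfolding adjc_def using PG_irr m by blast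
next
  fix a b k assume "adjc m a b" "adjc m a k" "adjc m b k" then show False
    unfolding adjc_def using PG_tri m by blast
next
  fix s i s' i' assume "s \<in> S (Khat m)" "i < 4" "s' \<in> S (Khat m)" "i' < 4"
    "corner_ends (Khat m) s i = corner_ends (Khat m) s' i'"
  then show "(s, i) = (s', i')" using cinjK m by (auto simp: Khat_S)
next
  fix s and i :: nat assume s0: "s \<in> S (Khat m)"
  then obtain x R where s: "s = (x, R)" and x: "x \<in> orbit0 m" and R: "1 \<le> R" "R \<le> 2 * m"
    by (auto simp: Khat_S)
  have r: "i mod 4 < 4" by simp
  note P = sqK_props[OF m x R r]
  have e: "\<And>k. ent (Khat m) s (i + k) = sqK m x R ! ((i mod 4 + k) mod 4)"
    using s ent_shift entK[OF x R] by metis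
  have e0: "ent (Khat m) s i = sqK m x R ! ((i mod 4 + 0) mod 4)" using e[of 0] by simp
  have e1: "ent (Khat m) s (i + 1) = sqK m x R ! ((i mod 4 + 1) mod 4)" by (rule e)
  have e2: "ent (Khat m) s (i + 2) = sqK m x R ! ((i mod 4 + 2) mod 4)" by (rule e)
  show "ccK m (fst (ent (Khat m) s (i + 2))) = ccK m (fst (ent (Khat m) s i))"
    unfolding e2 e0 using P(1) by simp
  show "src (Khat m) (fst (ent (Khat m) s (i + 2))) =
      flipc (ccK m (fst (ent (Khat m) s (i + 1)))) (src (Khat m) (fst (ent (Khat m) s i)))"
    unfolding e2 e1 e0 Khat_src using P(2) by simp
  show "snd (ent (Khat m) s i) \<noteq> snd (ent (Khat m) s (i + 2))"
    unfolding e2 e0 using P(4) by simp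
  show "adjc m (ccK m (fst (ent (Khat m) s i))) (ccK m (fst (ent (Khat m) s (i + 1))))"
    unfolding e1 e0 using P(5) by simp
  show "colK (fst (ent (Khat m) s i)) \<noteq> colK (fst (ent (Khat m) s (i + 1)))"
    unfolding e1 e0 using P(6) by simp
  fix k assume "k \<noteq> ccK m (fst (ent (Khat m) s i))" "k \<noteq> ccK m (fst (ent (Khat m) s (i + 1)))"
  then show "src (Khat m) (fst (ent (Khat m) s i)) k = src (Khat m) (fst (ent (Khat m) s (i + 1))) k"
    unfolding e1 e0 Khat_src using P(3) by simp
qed

lemma Khat_special: "even m \<Longrightarrow> 0 < m \<Longrightarrow> special (Khat m)"
  using critl.special[OF critK] by blast


definition cpy :: "('v \<Rightarrow> nat) \<Rightarrow> ('e \<Rightarrow> nat) \<Rightarrow> ('s \<Rightarrow> nat) \<Rightarrow> ('v,'e,'s) sqc \<Rightarrow> (nat,nat,nat) sqc" where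
  "cpy gV gE gS Y = \<lparr> V = gV ` V Y, E = gE ` E Y, S = gS ` S Y,
     src = (\<lambda>e. gV (src Y (inv_into (E Y) gE e))), tgt = (\<lambda>e. gV (tgt Y (inv_into (E Y) gE e))),
     bd = (\<lambda>s. map (\<lambda>(e, b). (gE e, b)) (bd Y (inv_into (S Y) gS s))) \<rparr>"

lemma bij_from_img: "inj_on g C \<Longrightarrow> (\<And>c. c \<in> C \<Longrightarrow> f (g c) = c) \<Longrightarrow> bij_betw f (g ` C) C"
  unfolding bij_betw_def inj_on_def by (auto simp: image_iff)

lemma rtrancl_map_fun: "(\<And>a b. (a, b) \<in> R \<Longrightarrow> (f a, f b) \<in> R') \<Longrightarrow> (a, b) \<in> R\<^sup>* \<Longrightarrow> (f a, f b) \<in> R'\<^sup>*"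
proof -
  assume h: "\<And>a b. (a, b) \<in> R \<Longrightarrow> (f a, f b) \<in> R'" and ab: "(a, b) \<in> R\<^sup>*"
  from ab show ?thesis
  proof (induction rule: rtrancl_induct)
    case base then show ?case by simp
  next
    case (step y z) then show ?case using h[of y z] by (meson rtrancl.rtrancl_into_rtrancl)
  qed
qed

locale cpyl =
  fixes Y :: "('v,'e,'s) sqc" and gV :: "'v \<Rightarrow> nat" and gE :: "'e \<Rightarrow> nat" and gS :: "'s \<Rightarrow> nat"
  assumes iV: "inj_on gV (V Y)" and iE: "inj_on gE (E Y)" and iS: "inj_on gS (S Y)"
    and wfY: "sqc_wf Y"
begin

abbreviation "Z \<equiv> cpy gV gE gS Y"
abbreviation "hE \<equiv> (\<lambda>(e::'e, b::bool). (gE e, b))"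

lemma Z_V: "V Z = gV ` V Y" unfolding cpy_def by simp
lemma Z_E: "E Z = gE ` E Y" unfolding cpy_def by simp
lemma Z_S: "S Z = gS ` S Y" unfolding cpy_def by simp
lemma Z_src: "e \<in> E Y \<Longrightarrow> src Z (gE e) = gV (src Y e)" unfolding cpy_def using iE by simp
lemma Z_tgt: "e \<in> E Y \<Longrightarrow> tgt Z (gE e) = gV (tgt Y e)" unfolding cpy_def using iE by simp
lemma Z_bd: "s \<in> S Y \<Longrightarrow> bd Z (gS s) = map hE (bd Y s)" unfolding cpy_def using iS by simp

lemma lenY: "s \<in> S Y \<Longrightarrow> length (bd Y s) = 4" using wfY unfolding sqc_wf_def by auto

lemma Z_ent: "s \<in> S Y \<Longrightarrow> ent Z (gS s) i = hE (ent Y s i)"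
  unfolding ent_def using Z_bd lenY by simp

lemma Y_entE: "s \<in> S Y \<Longrightarrow> fst (ent Y s i) \<in> E Y"
proof -
  assume s: "s \<in> S Y"
  have "fst (ent Y s (i mod 4)) \<in> E Y" using wfY s unfolding sqc_wf_def by auto
  then show ?thesis by (simp add: ent_mod)
qed

lemma Z_ent_fst: "s \<in> S Y \<Longrightarrow> fst (ent Z (gS s) i) = gE (fst (ent Y s i))"
  using Z_ent[of s i] by (simp add: case_prod_beta)

lemma Z_ent_snd: "s \<in> S Y \<Longrightarrow> snd (ent Z (gS s) i) = snd (ent Y s i)"
  using Z_ent[of s i] by (simp add: case_prod_beta)

lemma Z_hvtx: "fst h \<in> E Y \<Longrightarrow> hvtx Z (hE h) = gV (hvtx Y h)"
  unfolding hvtx_def by (cases h) (simp add: Z_src Z_tgt)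

lemma hE_flipb: "hE (flipb h) = flipb (hE h)"
  unfolding flipb_def by (cases h) simp

lemma Z_wf: "sqc_wf Z"
  unfolding sqc_wf_def
proof (intro conjI ballI allI impI)
  fix e assume "e \<in> E Z"
  then obtain e0 where e: "e = gE e0" "e0 \<in> E Y" by (auto simp: Z_E)
  show "src Z e \<in> V Z" "tgt Z e \<in> V Z" using e wfY unfolding sqc_wf_def
    by (auto simp: Z_src Z_tgt Z_V)
next
  fix s assume "s \<in> S Z"
  then obtain s0 where s: "s = gS s0" "s0 \<in> S Y" by (auto simp: Z_S)
  show "length (bd Z s) = 4" using s lenY Z_bd by simp
  fix i :: nat assume i: "i < 4"
  show "fst (ent Z s i) \<in> E Z" using s Y_entE Z_ent_fst by (simp add: Z_E)
  have w: "hvtx Y (flipb (ent Y s0 i)) = hvtx Y (ent Y s0 (i + 1))"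
    using wfY s i unfolding sqc_wf_def by auto
  show "hvtx Z (flipb (ent Z s i)) = hvtx Z (ent Z s (i + 1))"
    using w s Z_ent[of s0] Z_hvtx Y_entE[OF s(2)] by (simp add: hE_flipb[symmetric])
qed

lemma Z_finite: "finite_cx Y \<Longrightarrow> finite_cx Z"
  unfolding finite_cx_def by (simp add: Z_V Z_E Z_S)

lemma Z_nonempty: "V Y \<noteq> {} \<Longrightarrow> V Z \<noteq> {}"
  by (simp add: Z_V)

lemma Y_src_V: "e \<in> E Y \<Longrightarrow> src Y e \<in> V Y" using wfY unfolding sqc_wf_def by auto
lemma Y_tgt_V: "e \<in> E Y \<Longrightarrow> tgt Y e \<in> V Y" using wfY unfolding sqc_wf_def by auto

lemma Z_connected: "connected_cx Y \<Longrightarrow> connected_cx Z"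
  unfolding connected_cx_def
proof (intro ballI)
  assume c: "\<forall>u\<in>V Y. \<forall>w\<in>V Y. (u, w) \<in> ({(src Y e, tgt Y e) |e. e \<in> E Y} \<union> {(tgt Y e, src Y e) |e. e \<in> E Y})\<^sup>*"
  fix u w assume "u \<in> V Z" "w \<in> V Z"
  then obtain u0 w0 where u: "u = gV u0" "u0 \<in> V Y" and w: "w = gV w0" "w0 \<in> V Y" by (auto simp: Z_V)
  have "(gV u0, gV w0) \<in> ({(src Z e, tgt Z e) |e. e \<in> E Z} \<union> {(tgt Z e, src Z e) |e. e \<in> E Z})\<^sup>*"
  proof (rule rtrancl_map_fun[of "{(src Y e, tgt Y e) |e. e \<in> E Y} \<union> {(tgt Y e, src Y e) |e. e \<in> E Y}"])
    fix a b assume "(a, b) \<in> {(src Y e, tgt Y e) |e. e \<in> E Y} \<union> {(tgt Y e, src Y e) |e. e \<in> E Y}"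
    then obtain e where e: "e \<in> E Y" and ab: "(a, b) = (src Y e, tgt Y e) \<or> (a, b) = (tgt Y e, src Y e)" by blast
    have "gE e \<in> E Z" using e by (simp add: Z_E)
    then show "(gV a, gV b) \<in> {(src Z e, tgt Z e) |e. e \<in> E Z} \<union> {(tgt Z e, src Z e) |e. e \<in> E Z}"
      using ab Z_src[OF e] Z_tgt[OF e] by auto
  next
    show "(u0, w0) \<in> ({(src Y e, tgt Y e) |e. e \<in> E Y} \<union> {(tgt Y e, src Y e) |e. e \<in> E Y})\<^sup>*"
      using c u w by blast
  qed
  then show "(u, w) \<in> ({(src Z e, tgt Z e) |e. e \<in> E Z} \<union> {(tgt Z e, src Z e) |e. e \<in> E Z})\<^sup>*"
    using u w by simp
qed

lemma Z_cover: "covering_map Z Y (inv_into (V Y) gV) (inv_into (E Y) gE) (inv_into (S Y) gS)"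
proof -
  have ivV: "\<And>v. v \<in> V Y \<Longrightarrow> inv_into (V Y) gV (gV v) = v" using iV by simp
  have ivE: "\<And>e. e \<in> E Y \<Longrightarrow> inv_into (E Y) gE (gE e) = e" using iE by simp
  have ivS: "\<And>s. s \<in> S Y \<Longrightarrow> inv_into (S Y) gS (gS s) = s" using iS by simp
  have bdE: "\<And>s h. s \<in> S Y \<Longrightarrow> h \<in> set (bd Y s) \<Longrightarrow> fst h \<in> E Y"
  proof -
    fix s h assume s: "s \<in> S Y" and h: "h \<in> set (bd Y s)"
    then obtain k where k: "k < 4" "h = bd Y s ! k" using lenY[OF s] by (auto simp: in_set_conv_nth)
    then have "h = ent Y s k" unfolding ent_def by simp
    then show "fst h \<in> E Y" using Y_entE[OF s] by simp
  qed
  show ?thesis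
    unfolding covering_map_def
  proof (intro conjI ballI)
    show "inv_into (V Y) gV ` V Z \<subseteq> V Y" by (auto simp: Z_V ivV)
    show "inv_into (E Y) gE ` E Z \<subseteq> E Y" by (auto simp: Z_E ivE)
    show "inv_into (S Y) gS ` S Z \<subseteq> S Y" by (auto simp: Z_S ivS)
  next
    fix e assume "e \<in> E Z"
    then obtain e0 where e: "e = gE e0" "e0 \<in> E Y" by (auto simp: Z_E)
    then show "src Y (inv_into (E Y) gE e) = inv_into (V Y) gV (src Z e)"
      "tgt Y (inv_into (E Y) gE e) = inv_into (V Y) gV (tgt Z e)"
      by (simp_all add: ivE Z_src Z_tgt ivV Y_src_V Y_tgt_V)
  next
    fix s assume "s \<in> S Z"
    then obtain s0 where s: "s = gS s0" "s0 \<in> S Y" by (auto simp: Z_S)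
    have "map (\<lambda>(e, b). (inv_into (E Y) gE e, b)) (map hE (bd Y s0)) = bd Y s0"
      unfolding map_map by (rule map_idI) (use bdE[OF s(2)] ivE in auto)
    then show "bd Y (inv_into (S Y) gS s) = map (\<lambda>(e, b). (inv_into (E Y) gE e, b)) (bd Z s)"
      using s by (simp add: ivS Z_bd)
  next
    fix v assume "v \<in> V Z"
    then obtain v0 where v: "v = gV v0" "v0 \<in> V Y" by (auto simp: Z_V)
    have fv: "inv_into (V Y) gV v = v0" using v ivV by simp
    have s1: "{e \<in> E Z. src Z e = v} = gE ` {e \<in> E Y. src Y e = v0}"
    proof -
      have "\<And>e. e \<in> E Y \<Longrightarrow> gV (src Y e) = gV v0 \<longleftrightarrow> src Y e = v0"
        using v iV Y_src_V by (auto dest: inj_onD)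
      then show ?thesis using v by (auto simp: Z_E Z_src)
    qed
    have t1: "{e \<in> E Z. tgt Z e = v} = gE ` {e \<in> E Y. tgt Y e = v0}"
    proof -
      have "\<And>e. e \<in> E Y \<Longrightarrow> gV (tgt Y e) = gV v0 \<longleftrightarrow> tgt Y e = v0"
        using v iV Y_tgt_V by (auto dest: inj_onD)
      then show ?thesis using v by (auto simp: Z_E Z_tgt)
    qed
    have c1: "corners Z v = (\<lambda>(s, i). (gS s, i)) ` corners Y v0"
    proof
      show "corners Z v \<subseteq> (\<lambda>(s, i). (gS s, i)) ` corners Y v0"
      proof
        fix c assume "c \<in> corners Z v"
        then obtain s i where c: "c = (s, i)" "s \<in> S Z" "i < 4" "hvtx Z (ent Z s i) = v"
          unfolding corners_def by auto
        obtain s0 where s: "s = gS s0" "s0 \<in> S Y" using c by (auto simp: Z_S)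
        have hv: "hvtx Z (ent Z s i) = gV (hvtx Y (ent Y s0 i))"
          using s Z_ent Z_hvtx Y_entE by simp
        have hV: "hvtx Y (ent Y s0 i) \<in> V Y" unfolding hvtx_def using Y_entE[OF s(2)] Y_src_V Y_tgt_V by simp
        have "hvtx Y (ent Y s0 i) = v0" using hv c(4) v iV hV by (auto dest: inj_onD)
        then show "c \<in> (\<lambda>(s, i). (gS s, i)) ` corners Y v0" using c s unfolding corners_def by auto
      qed
    next
      show "(\<lambda>(s, i). (gS s, i)) ` corners Y v0 \<subseteq> corners Z v"
      proof
        fix c assume "c \<in> (\<lambda>(s, i). (gS s, i)) ` corners Y v0"
        then obtain s0 i where c: "c = (gS s0, i)" "s0 \<in> S Y" "i < 4" "hvtx Y (ent Y s0 i) = v0"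
          unfolding corners_def by auto
        have "hvtx Z (ent Z (gS s0) i) = gV (hvtx Y (ent Y s0 i))"
          using c Z_ent Z_hvtx Y_entE by simp
        then show "c \<in> corners Z v" using c v unfolding corners_def by (auto simp: Z_S)
      qed
    qed
    show "bij_betw (inv_into (E Y) gE) {e \<in> E Z. src Z e = v} {e \<in> E Y. src Y e = inv_into (V Y) gV v}"
      unfolding s1 fv by (rule bij_from_img) (use iE ivE in \<open>auto intro: inj_on_subset\<close>)
    show "bij_betw (inv_into (E Y) gE) {e \<in> E Z. tgt Z e = v} {e \<in> E Y. tgt Y e = inv_into (V Y) gV v}"
      unfolding t1 fv by (rule bij_from_img) (use iE ivE in \<open>auto intro: inj_on_subset\<close>)
    show "bij_betw (\<lambda>(s, i). (inv_into (S Y) gS s, i)) (corners Z v) (corners Y (inv_into (V Y) gV v))"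
      unfolding c1 fv
    proof (rule bij_from_img)
      show "inj_on (\<lambda>(s, i). (gS s, i)) (corners Y v0)"
        using iS unfolding corners_def by (auto simp: inj_on_def)
      fix c assume "c \<in> corners Y v0"
      then show "(\<lambda>(s, i). (inv_into (S Y) gS s, i)) ((\<lambda>(s, i). (gS s, i)) c) = c"
        unfolding corners_def using ivS by auto
    qed
  qed
qed

lemma Z_crit:
  assumes "critl Y \<phi> cc col adj"
  shows "critl Z (\<lambda>v. \<phi> (inv_into (V Y) gV v)) (\<lambda>e. cc (inv_into (E Y) gE e))
     (\<lambda>e. col (inv_into (E Y) gE e)) adj"
proof -
  interpret c: critl Y \<phi> cc col adj by (rule assms)
  have ivV: "\<And>v. v \<in> V Y \<Longrightarrow> inv_into (V Y) gV (gV v) = v" using iV by simp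
  have ivE: "\<And>e. e \<in> E Y \<Longrightarrow> inv_into (E Y) gE (gE e) = e" using iE by simp
  show ?thesis
  proof
    show "sqc_wf Z" by (rule Z_wf)
    show "inj_on (\<lambda>v. \<phi> (inv_into (V Y) gV v)) (V Z)"
      using c.injphi by (auto simp: Z_V ivV inj_on_def)
  next
    fix e assume "e \<in> E Z"
    then obtain e0 where e: "e = gE e0" "e0 \<in> E Y" by (auto simp: Z_E)
    then show "\<phi> (inv_into (V Y) gV (tgt Z e)) = flipc (cc (inv_into (E Y) gE e)) (\<phi> (inv_into (V Y) gV (src Z e)))"
      using c.tgtphi[of e0] c.src_V c.tgt_V by (simp add: Z_src Z_tgt ivV ivE)
  next
    fix e f assume "e \<in> E Z" "f \<in> E Z" "src Z e = src Z f" "cc (inv_into (E Y) gE e) = cc (inv_into (E Y) gE f)"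
    then obtain e0 f0 where e: "e = gE e0" "e0 \<in> E Y" and f: "f = gE f0" "f0 \<in> E Y"
      and sf: "gV (src Y e0) = gV (src Y f0)" and cc: "cc e0 = cc f0" by (auto simp: Z_E Z_src ivE)
    have "src Y e0 = src Y f0" using sf iV c.src_V e f by (auto dest: inj_onD)
    then show "e = f" using c.uniq[OF e(2) f(2) _ cc] e f by simp
  next
    fix s and i :: nat assume "s \<in> S Z"
    then obtain s0 where s: "s = gS s0" "s0 \<in> S Y" by (auto simp: Z_S)
    have E: "\<And>k. fst (ent Z s k) = gE (fst (ent Y s0 k))" using s Z_ent_fst by simp
    have Sn: "\<And>k. snd (ent Z s k) = snd (ent Y s0 k)" using s Z_ent_snd by simp
    have iv: "\<And>k. inv_into (E Y) gE (fst (ent Z s k)) = fst (ent Y s0 k)"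
      unfolding E by (rule ivE[OF Y_entE[OF s(2)]])
    have sr: "\<And>k. inv_into (V Y) gV (src Z (fst (ent Z s k))) = src Y (fst (ent Y s0 k))"
      unfolding E Z_src[OF Y_entE[OF s(2)]] by (rule ivV[OF c.src_V[OF Y_entE[OF s(2)]]])
    show "cc (inv_into (E Y) gE (fst (ent Z s (i + 2)))) = cc (inv_into (E Y) gE (fst (ent Z s i)))"
      unfolding iv by (rule c.sq1[OF s(2)])
    show "\<phi> (inv_into (V Y) gV (src Z (fst (ent Z s (i + 2))))) =
        flipc (cc (inv_into (E Y) gE (fst (ent Z s (i + 1))))) (\<phi> (inv_into (V Y) gV (src Z (fst (ent Z s i)))))"
      unfolding iv sr by (rule c.sq2[OF s(2)])
    show "snd (ent Z s i) \<noteq> snd (ent Z s (i + 2))" unfolding Sn by (rule c.sq4[OF s(2)])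
    show "adj (cc (inv_into (E Y) gE (fst (ent Z s i)))) (cc (inv_into (E Y) gE (fst (ent Z s (i + 1)))))"
      unfolding iv by (rule c.sq5[OF s(2)])
    show "col (inv_into (E Y) gE (fst (ent Z s i))) \<noteq> col (inv_into (E Y) gE (fst (ent Z s (i + 1))))"
      unfolding iv by (rule c.sq6[OF s(2)])
    fix k assume "k \<noteq> cc (inv_into (E Y) gE (fst (ent Z s i)))"
      "k \<noteq> cc (inv_into (E Y) gE (fst (ent Z s (i + 1))))"
    then show "\<phi> (inv_into (V Y) gV (src Z (fst (ent Z s i)))) k = \<phi> (inv_into (V Y) gV (src Z (fst (ent Z s (i + 1))))) k"
      unfolding iv sr by (rule c.sq3[OF s(2)])
  next
    fix a b assume "adj a b" then show "adj b a" by (rule c.sym)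
  next
    fix a show "\<not> adj a a" by (rule c.irr)
  next
    fix a b k assume "adj a b" "adj a k" "adj b k" then show False by (rule c.tri)
  next
    fix s i s' i' assume a: "s \<in> S Z" "i < 4" "s' \<in> S Z" "i' < 4" "corner_ends Z s i = corner_ends Z s' i'"
    obtain s0 where s: "s = gS s0" "s0 \<in> S Y" using a by (auto simp: Z_S)
    obtain s0' where s': "s' = gS s0'" "s0' \<in> S Y" using a by (auto simp: Z_S)
    have ce: "\<And>t j. t \<in> S Y \<Longrightarrow> corner_ends Z (gS t) j = hE ` corner_ends Y t j"
      unfolding corner_ends_def by (simp add: Z_ent hE_flipb)
    have sub: "\<And>t j. t \<in> S Y \<Longrightarrow> corner_ends Y t j \<subseteq> E Y \<times> UNIV"
      unfolding corner_ends_def using Y_entE by (auto simp: flipb_def mem_Times_iff)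
    have inj: "inj_on hE (E Y \<times> UNIV)" using iE by (auto simp: inj_on_def)
    have "hE ` corner_ends Y s0 i = hE ` corner_ends Y s0' i'" using a(5) s s' ce by simp
    then have "corner_ends Y s0 i = corner_ends Y s0' i'"
      using inj_on_image_eq_iff[OF inj sub[OF s(2)] sub[OF s'(2)]] by simp
    then have "(s0, i) = (s0', i')" using c.cinj[OF s(2) a(2) s'(2) a(4)] by simp
    then show "(s, i) = (s', i')" using s s' by simp
  qed
qed

end


lemma all4: "(\<forall>i<(4::nat). P i) \<longleftrightarrow> P 0 \<and> P 1 \<and> P 2 \<and> P 3"
proof
  assume "P 0 \<and> P 1 \<and> P 2 \<and> P 3"
  then show "\<forall>i<4. P i"
  proof (intro allI impI)
    fix i :: nat assume "i < 4" and p: "P 0 \<and> P 1 \<and> P 2 \<and> P 3"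
    then have "i = 0 \<or> i = 1 \<or> i = 2 \<or> i = 3" by auto
    then show "P i" using p by auto
  qed
qed simp

lemma rel_parity:
  assumes m: "even m" and R: "1 \<le> R" "R \<le> 2 * m"
  shows "\<exists>k\<in>{0,1::nat}. \<forall>i<4. (odd (fst (rel m R ! ((i + k) mod 4))) \<longleftrightarrow> even i)"
proof (cases "R \<le> m")
  case True
  have r: "rel m R = [(R, True), (R + 1, True), (R, False), (R + 1, False)]" using True by (simp add: rel_def)
  show ?thesis
  proof (cases "odd R")
    case True
    then show ?thesis unfolding r all4 by (intro bexI[of _ 0]) auto
  next
    case False
    then show ?thesis unfolding r all4 by (intro bexI[of _ 1]) auto
  qed
next
  case False
  have r: "rel m R = [(R + 1, False), (R - m, True), (R + 1, True), (R, False)]" using False by (simp add: rel_def)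
  have p: "odd (R - m) \<longleftrightarrow> odd R" using False m by auto
  show ?thesis
  proof (cases "odd R")
    case True
    then show ?thesis unfolding r all4 using p by (intro bexI[of _ 1]) auto
  next
    case nR: False
    then show ?thesis unfolding r all4 using p by (intro bexI[of _ 0]) auto
  qed
qed

lemma VH_Kmm:
  assumes m: "even m"
  shows "is_VH (Kmm m)"
  unfolding is_VH_def
proof (intro exI conjI ballI)
  let ?Vt = "{i \<in> {1..2*m+1}. odd i}" and ?Ht = "{i \<in> {1..2*m+1}. even i}"
  show "?Vt \<union> ?Ht = E (Kmm m)" by (auto simp: Kmm_def)
  show "?Vt \<inter> ?Ht = {}" by auto
  fix s assume "s \<in> S (Kmm m)"
  then have R: "1 \<le> s" "s \<le> 2 * m" by (auto simp: Kmm_def)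
  obtain k where k: "k \<in> {0,1::nat}" and kp: "\<forall>i<4. (odd (fst (rel m s ! ((i + k) mod 4))) \<longleftrightarrow> even i)"
    using rel_parity[OF m R] by blast
  have inr: "\<And>n. fst (rel m s ! (n mod 4)) \<in> {1..2*m+1}"
  proof -
    fix n :: nat
    have "(n::nat) mod 4 = 0 \<or> n mod 4 = 1 \<or> n mod 4 = 2 \<or> n mod 4 = 3" by auto
    then show "fst (rel m s ! (n mod 4)) \<in> {1..2*m+1}" using R by (auto simp: rel_def)
  qed
  show "\<exists>k\<in>{0, 1}. \<forall>i<4. fst (ent (Kmm m) s (i + k)) \<in> (if even i then ?Vt else ?Ht)"
    using k kp inr by (intro bexI[of _ k]) (auto simp: ent_def Kmm_def)
qed

lemma VH_Khat:
  assumes m: "even m" "0 < m"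
  shows "is_VH (Khat m)"
  unfolding is_VH_def
proof (intro exI conjI ballI)
  let ?Vt = "{e \<in> E (Khat m). odd (snd e)}" and ?Ht = "{e \<in> E (Khat m). even (snd e)}"
  show "?Vt \<union> ?Ht = E (Khat m)" by auto
  show "?Vt \<inter> ?Ht = {}" by auto
  fix s assume s: "s \<in> S (Khat m)"
  then obtain x R where sx: "s = (x, R)" and x: "x \<in> orbit0 m" and R: "1 \<le> R" "R \<le> 2 * m"
    by (auto simp: Khat_S)
  obtain k where k: "k \<in> {0,1::nat}" and kp: "\<forall>i<4. (odd (fst (rel m R ! ((i + k) mod 4))) \<longleftrightarrow> even i)"
    using rel_parity[OF m(1) R] by blast
  have inE: "\<And>n. fst (ent (Khat m) s n) \<in> E (Khat m)"
    using critl.ent_E[OF critK[OF m] s] .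
  have g: "\<And>n. snd (fst (ent (Khat m) s n)) = fst (rel m R ! (n mod 4))"
  proof -
    fix n :: nat
    have "gb (sqK m x R ! (n mod 4)) = rel m R ! (n mod 4)" by (rule gb_sqK) simp
    then show "snd (fst (ent (Khat m) s n)) = fst (rel m R ! (n mod 4))"
      using sx entK[OF x R] unfolding gb_def by (metis fst_conv)
  qed
  show "\<exists>k\<in>{0, 1}. \<forall>i<4. fst (ent (Khat m) s (i + k)) \<in> (if even i then ?Vt else ?Ht)"
    using k kp inE g by (intro bexI[of _ k]) auto
qed

lemma Khat_connected: "connected_cx (Khat m)"
proof -
  let ?R = "{(src (Khat m) e, tgt (Khat m) e) |e. e \<in> E (Khat m)} \<union>
            {(tgt (Khat m) e, src (Khat m) e) |e. e \<in> E (Khat m)}"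
  have base: "\<And>u. u \<in> orbit0 m \<Longrightarrow> ((\<lambda>_. False), u) \<in> ?R\<^sup>* \<and> (u, (\<lambda>_. False)) \<in> ?R\<^sup>*"
  proof -
    fix u assume "u \<in> orbit0 m"
    then show "((\<lambda>_. False), u) \<in> ?R\<^sup>* \<and> (u, (\<lambda>_. False)) \<in> ?R\<^sup>*"
    proof (induction rule: orbit0.induct)
      case base then show ?case by simp
    next
      case (step x j)
      have e: "(x, j) \<in> E (Khat m)" using step by (simp add: Khat_E)
      have "(x, piA m j x) \<in> ?R" using e by (auto simp: Khat_src Khat_tgt)
      moreover have "(piA m j x, x) \<in> ?R" using e by (auto simp: Khat_src Khat_tgt)
      ultimately show ?case using step by (meson rtrancl.rtrancl_into_rtrancl converse_rtrancl_into_rtrancl)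
    qed
  qed
  show ?thesis unfolding connected_cx_def Khat_V
    using base by (meson rtrancl_trans)
qed

lemma Khat_finite: "finite_cx (Khat m)"
  unfolding finite_cx_def Khat_V Khat_E Khat_S using finite_orbit by simp


lemma main_cover:
  assumes m: "even m" "0 < m"
  shows "\<exists>(X :: (nat, nat, nat) sqc) fV fE fS. finite_cover X (Khat m) fV fE fS \<and> special X"
proof -
  let ?Y = "Khat m"
  let ?gV = "to_nat_on (V ?Y)" and ?gE = "to_nat_on (E ?Y)" and ?gS = "to_nat_on (S ?Y)"
  have fin: "finite (V ?Y)" "finite (E ?Y)" "finite (S ?Y)" using Khat_finite unfolding finite_cx_def by auto
  interpret c: cpyl ?Y ?gV ?gE ?gS
  proof
    show "inj_on ?gV (V ?Y)" using fin by (intro inj_on_to_nat_on countable_finite)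
    show "inj_on ?gE (E ?Y)" using fin by (intro inj_on_to_nat_on countable_finite)
    show "inj_on ?gS (S ?Y)" using fin by (intro inj_on_to_nat_on countable_finite)
    show "sqc_wf ?Y" using m by (intro Khat_wf) auto
  qed
  let ?X = "cpy ?gV ?gE ?gS ?Y"
  have "finite_cover ?X ?Y (inv_into (V ?Y) ?gV) (inv_into (E ?Y) ?gE) (inv_into (S ?Y) ?gS)"
    unfolding finite_cover_def
  proof (intro conjI)
    show "sqc_wf ?X" by (rule c.Z_wf)
    show "finite_cx ?X" by (rule c.Z_finite[OF Khat_finite])
    show "V ?X \<noteq> {}" by (rule c.Z_nonempty) (auto simp: Khat_V intro: orbit0.base)
    show "connected_cx ?X" by (rule c.Z_connected[OF Khat_connected])
    show "covering_map ?X ?Y (inv_into (V ?Y) ?gV) (inv_into (E ?Y) ?gE) (inv_into (S ?Y) ?gS)"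
      by (rule c.Z_cover)
  qed
  moreover have "special ?X"
    using critl.special[OF c.Z_crit[OF critK[OF m]]] .
  ultimately show ?thesis by blast
qed



theorem proposition6p6:
  fixes m :: nat
  assumes "even m" and "0 < m"
  shows "is_VH (Kmm m) \<and> is_VH (Khat m) \<and>
         (\<exists>(X :: (nat, nat, nat) sqc) fV fE fS.
             finite_cover X (Khat m) fV fE fS \<and> special X)"
  using VH_Kmm[OF assms(1)] VH_Khat[OF assms] main_cover[OF assms] by blast


end
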